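(* Let $\mu\in[0,2]$. Then for every bivariate copula $C$, \[ \mu\,\psi(C)+\xi(C)\ \ge\ \mu\,\psi(C^{\searrow}_\mu)+\xi(C^{\searrow}_\mu). \]
   Context: For a bivariate copula $C$: $\xi(C)=6\int_0^1\int_0^1(\partial_1C(u,v))^2\,du\,dv-2$ and $\psi(C)=6\int_0^1C(u,u)\,du-2$. For $\mu\in[0,2]$ let $v_0=\frac{\mu}{2+\mu}$, $v_1=\frac{2}{2+\mu}$ and $h_\mu(t,v)=h_1(v)\mathbf{1}_{\{t\le v\}}+h_2(v)\mathbf{1}_{\{t>v\}}$, where $(h_1,h_2)(v)=(0,\frac{v}{1-v})$ on $[0,v_0]$, $(v-\frac{\mu}{2}(1-v),\,v+\frac{\mu}{2}v)$ on $(v_0,v_1]$, and $(2-\frac1v,1)$ on $(v_1,1]$; $C^{\searrow}_\mu(u,v)=\int_0^uh_\mu(t,v)\,dt$ (not necessarily a copula), with $\xi(C^{\searrow}_\mu):=6\int\int h_\mu^2-2$ and $\psi(C^{\searrow}_\mu):=6\int_0^1\int_0^1\mathbf{1}_{\{t\le v\}}h_\mu(t,v)\,dt\,dv-2$. Explicitly, with $v_1=\frac2{2+\mu}$: $\psi(C^{\searrow}_\mu)=-2v_1^2+6v_1-5+\frac1{v_1}$ and $\xi(C^{\searrow}_\mu)=-4v_1^2+20v_1-17+\frac2{v_1}-\frac1{v_1^2}-12\ln v_1$. *)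

theory Defs
  imports "HOL-Analysis.Analysis"
begin

definition is_copula :: "(real \<Rightarrow> real \<Rightarrow> real) \<Rightarrow> bool" where
  "is_copula C \<longleftrightarrow>
     (\<forall>u\<in>{0..1}. C u 0 = 0 \<and> C 0 u = 0 \<and> C u 1 = u \<and> C 1 u = u) \<and>
     (\<forall>u1 u2 v1 v2. 0 \<le> u1 \<and> u1 \<le> u2 \<and> u2 \<le> 1 \<and> 0 \<le> v1 \<and> v1 \<le> v2 \<and> v2 \<le> 1 \<longrightarrow>
        C u2 v2 - C u2 v1 - C u1 v2 + C u1 v1 \<ge> 0)"

text \<open>Chatterjee's xi: 6 * int_0^1 int_0^1 (d_1 C(u,v))^2 du dv - 2
  (partial derivative in the first argument; it exists a.e., and the
  Henstock-Kurzweil integral ignores the null set where it does not).\<close>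
definition xi_cop :: "(real \<Rightarrow> real \<Rightarrow> real) \<Rightarrow> real" where
  "xi_cop C = 6 * integral {0..1} (\<lambda>v. integral {0..1} (\<lambda>u. (deriv (\<lambda>t. C t v) u)^2)) - 2"

definition psi_cop :: "(real \<Rightarrow> real \<Rightarrow> real) \<Rightarrow> real" where
  "psi_cop C = 6 * integral {0..1} (\<lambda>u. C u u) - 2"

definition v0_mu :: "real \<Rightarrow> real" where "v0_mu \<mu> = \<mu> / (2 + \<mu>)"
definition v1_mu :: "real \<Rightarrow> real" where "v1_mu \<mu> = 2 / (2 + \<mu>)"

definition h1_mu :: "real \<Rightarrow> real \<Rightarrow> real" where
  "h1_mu \<mu> v = (if v \<le> v0_mu \<mu> then 0
                 else if v \<le> v1_mu \<mu> then v - \<mu>/2 * (1 - v)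
                 else 2 - 1/v)"

definition h2_mu :: "real \<Rightarrow> real \<Rightarrow> real" where
  "h2_mu \<mu> v = (if v \<le> v0_mu \<mu> then v / (1 - v)
                 else if v \<le> v1_mu \<mu> then v + \<mu>/2 * v
                 else 1)"

definition h_mu :: "real \<Rightarrow> real \<Rightarrow> real \<Rightarrow> real" where
  "h_mu \<mu> t v = (if t \<le> v then h1_mu \<mu> v else h2_mu \<mu> v)"

definition xi_searrow :: "real \<Rightarrow> real" where
  "xi_searrow \<mu> = 6 * integral {0..1} (\<lambda>v. integral {0..1} (\<lambda>t. (h_mu \<mu> t v)^2)) - 2"

definition psi_searrow :: "real \<Rightarrow> real" where
  "psi_searrow \<mu> = 6 * integral {0..1} (\<lambda>v. integral {0..1}
       (\<lambda>t. (if t \<le> v then 1 else 0) * h_mu \<mu> t v)) - 2"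

end

theory Submission
  imports Defs
begin

definition lowset :: "(real \<Rightarrow> real) \<Rightarrow> real \<Rightarrow> real set" where
  "lowset F r = {x. \<forall>d>0. \<exists>a b. a < x \<and> x < b \<and> b - a < d \<and> F b - F a < r * (b - a)}"
definition highset :: "(real \<Rightarrow> real) \<Rightarrow> real \<Rightarrow> real set" where
  "highset F r = {x. \<forall>d>0. \<exists>a b. a < x \<and> x < b \<and> b - a < d \<and> F b - F a > r * (b - a)}"

lemma lowset_borel: "lowset F r \<in> sets borel"
proof -
  let ?U = "\<lambda>n::nat. \<Union>{{a<..<b} | a b. b - a < 1 / Suc n \<and> F b - F a < r * (b - a)}"
  have eq: "lowset F r = (\<Inter>n. ?U n)"
  proof (intro set_eqI iffI)
    fix x assume x: "x \<in> lowset F r"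
    show "x \<in> (\<Inter>n. ?U n)"
    proof
      fix n :: nat
      have "(1::real) / Suc n > 0" by simp
      moreover have "\<forall>d>0. \<exists>a b. a < x \<and> x < b \<and> b - a < d \<and> F b - F a < r * (b - a)"
        using x by (simp add: lowset_def)
      ultimately obtain a b where "a < x" "x < b" "b - a < 1 / Suc n" "F b - F a < r * (b - a)"
        by blast
      then show "x \<in> ?U n" by (intro UnionI[of "{a<..<b}"]) auto
    qed
  next
    fix x assume x: "x \<in> (\<Inter>n. ?U n)"
    show "x \<in> lowset F r" unfolding lowset_def
    proof (intro CollectI allI impI)
      fix d :: real assume "d > 0"
      then obtain n :: nat where n: "1 / Suc n < d"
        by (metis nat_approx_posE)
      from x have "x \<in> ?U n" by blast
      then obtain a b where "a < x" "x < b" "b - a < 1 / Suc n" "F b - F a < r * (b - a)"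
        by (auto simp del: greaterThanLessThan_iff) (auto)
      then show "\<exists>a b. a < x \<and> x < b \<and> b - a < d \<and> F b - F a < r * (b - a)"
        using n by (intro exI[of _ a] exI[of _ b]) auto
    qed
  qed
  have "open (?U n)" for n by (rule open_Union) auto
  then show ?thesis unfolding eq by (intro sets.countable_INT' borel_open) auto
qed

lemma highset_borel: "highset F r \<in> sets borel"
proof -
  let ?U = "\<lambda>n::nat. \<Union>{{a<..<b} | a b. b - a < 1 / Suc n \<and> F b - F a > r * (b - a)}"
  have eq: "highset F r = (\<Inter>n. ?U n)"
  proof (intro set_eqI iffI)
    fix x assume x: "x \<in> highset F r"
    show "x \<in> (\<Inter>n. ?U n)"
    proof
      fix n :: nat
      have "(1::real) / Suc n > 0" by simp
      moreover have "\<forall>d>0. \<exists>a b. a < x \<and> x < b \<and> b - a < d \<and> F b - F a > r * (b - a)"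
        using x by (simp add: highset_def)
      ultimately obtain a b where "a < x" "x < b" "b - a < 1 / Suc n" "F b - F a > r * (b - a)"
        by blast
      then show "x \<in> ?U n" by (intro UnionI[of "{a<..<b}"]) auto
    qed
  next
    fix x assume x: "x \<in> (\<Inter>n. ?U n)"
    show "x \<in> highset F r" unfolding highset_def
    proof (intro CollectI allI impI)
      fix d :: real assume "d > 0"
      then obtain n :: nat where n: "1 / Suc n < d"
        by (metis nat_approx_posE)
      from x have "x \<in> ?U n" by blast
      then obtain a b where "a < x" "x < b" "b - a < 1 / Suc n" "F b - F a > r * (b - a)"
        by (auto simp del: greaterThanLessThan_iff) (auto)
      then show "\<exists>a b. a < x \<and> x < b \<and> b - a < d \<and> F b - F a > r * (b - a)"
        using n by (intro exI[of _ a] exI[of _ b]) auto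
    qed
  qed
  have "open (?U n)" for n by (rule open_Union) auto
  then show ?thesis unfolding eq by (intro sets.countable_INT' borel_open) auto
qed


lemma shift_interval:
  fixes F :: "real \<Rightarrow> real"
  assumes lip: "\<And>x y. x \<le> y \<Longrightarrow> F y - F x \<le> y - x"
    and mono: "\<And>x y. x \<le> y \<Longrightarrow> F x \<le> F y"
    and ax: "a \<le> x" and xb: "x \<le> b" and ab: "a < b" and e: "e > 0"
  obtains a' b' where "a' < x" "x < b'" "b' - a' = b - a" "\<bar>(F b' - F a') - (F b - F a)\<bar> < e"
proof -
  define \<eta> where "\<eta> = min (e/3) ((b-a)/2)"
  have \<eta>1: "\<eta> \<le> e/3" "\<eta> \<le> (b-a)/2" "\<eta> > 0"
    unfolding \<eta>_def using e ab by (auto simp: min_def)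
  then have \<eta>: "\<eta> > 0" "\<eta> < e/2" "\<eta> < b - a" using e ab by auto
  show ?thesis
  proof (cases "a < x \<and> x < b")
    case True then show ?thesis using that[of a b] e by auto
  next
    case False
    then have "x = a \<or> x = b" using ax xb by auto
    then show ?thesis
    proof
      assume xa: "x = a"
      have 1: "F b - F (b - \<eta>) \<le> \<eta>" "F (b - \<eta>) \<le> F b" using lip[of "b-\<eta>" b] mono[of "b - \<eta>" b] \<eta> by auto
      have 2: "F a - F (a - \<eta>) \<le> \<eta>" "F (a - \<eta>) \<le> F a" using lip[of "a-\<eta>" a] mono[of "a - \<eta>" a] \<eta> by auto
      show ?thesis
        by (rule that[of "a - \<eta>" "b - \<eta>"]) (use xa \<eta> 1 2 in \<open>auto simp: abs_if\<close>)
    next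
      assume xb: "x = b"
      have 1: "F (b + \<eta>) - F b \<le> \<eta>" "F b \<le> F (b + \<eta>)" using lip[of b "b+\<eta>"] mono[of b "b+\<eta>"] \<eta> by auto
      have 2: "F (a + \<eta>) - F a \<le> \<eta>" "F a \<le> F (a + \<eta>)" using lip[of a "a+\<eta>"] mono[of a "a+\<eta>"] \<eta> by auto
      show ?thesis
        by (rule that[of "a + \<eta>" "b + \<eta>"]) (use xb \<eta> 1 2 in \<open>auto simp: abs_if\<close>)
    qed
  qed
qed

lemma lowset_mono:
  assumes x: "x \<in> lowset F r" and rr: "r \<le> r'" shows "x \<in> lowset F r'"
proof -
  have H: "\<forall>d>0. \<exists>a b. a < x \<and> x < b \<and> b - a < d \<and> F b - F a < r * (b - a)"
    using x by (simp add: lowset_def)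
  have "\<exists>a b. a < x \<and> x < b \<and> b - a < d \<and> F b - F a < r' * (b - a)" if d: "d > 0" for d
  proof -
    obtain a b where ab: "a < x" "x < b" "b - a < d" "F b - F a < r * (b - a)" using H d by blast
    have m: "r * (b - a) \<le> r' * (b - a)" using rr ab by (intro mult_right_mono) auto
    show ?thesis using ab m by (intro exI[of _ a] exI[of _ b] conjI) linarith+
  qed
  then show ?thesis by (simp add: lowset_def)
qed

lemma diff_point:
  fixes F :: "real \<Rightarrow> real"
  assumes lip: "\<And>x y. x \<le> y \<Longrightarrow> F y - F x \<le> y - x"
    and mono: "\<And>x y. x \<le> y \<Longrightarrow> F x \<le> F y"
    and nb: "\<And>r s. r \<in> \<rat> \<Longrightarrow> s \<in> \<rat> \<Longrightarrow> r < s \<Longrightarrow> \<not> (x \<in> lowset F r \<and> x \<in> highset F s)"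
  shows "F differentiable (at x)"
proof -
  define L where "L = {r. x \<in> lowset F r}"
  have two: "2 \<in> L" unfolding L_def lowset_def
  proof (intro CollectI allI impI)
    fix d :: real assume d: "d > 0"
    have "F (x + d/4) - F (x - d/4) \<le> (x + d/4) - (x - d/4)" using lip[of "x - d/4" "x + d/4"] d by auto
    then show "\<exists>a b. a < x \<and> x < b \<and> b - a < d \<and> F b - F a < 2 * (b - a)"
      using d by (intro exI[of _ "x - d/4"] exI[of _ "x + d/4"]) auto
  qed
  have pos: "r > 0" if "r \<in> L" for r
  proof -
    from that obtain a b where ab: "a < x" "x < b" "F b - F a < r * (b - a)"
      unfolding L_def lowset_def by (auto dest: spec[of _ 1])
    have "0 \<le> F b - F a" using mono[of a b] ab by auto
    then have "0 < r * (b - a)" using ab by linarith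
    then show ?thesis using ab by (simp add: zero_less_mult_iff)
  qed
  have bdd: "bdd_below L" using pos by (intro bdd_belowI[of _ 0]) (auto intro: less_imp_le)
  have ne: "L \<noteq> {}" using two by auto
  define l where "l = Inf L"
  have A: "\<exists>d>0. \<forall>a b. a < x \<longrightarrow> x < b \<longrightarrow> b - a < d \<longrightarrow> (l - e) * (b - a) \<le> F b - F a"
    if e: "e > 0" for e
  proof -
    have "l - e \<notin> L"
    proof
      assume "l - e \<in> L"
      then have "l \<le> l - e" unfolding l_def using bdd by (rule cInf_lower)
      then show False using e by simp
    qed
    then obtain d where d: "d > 0" "\<not> (\<exists>a b. a < x \<and> x < b \<and> b - a < d \<and> F b - F a < (l - e) * (b - a))"
      unfolding L_def lowset_def by auto
    show ?thesis
    proof (intro exI[of _ d] conjI allI impI)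
      fix a b assume "a < x" "x < b" "b - a < d"
      then show "(l - e) * (b - a) \<le> F b - F a" using d(2) not_less by blast
    qed (use d in auto)
  qed
  have B: "\<exists>d>0. \<forall>a b. a < x \<longrightarrow> x < b \<longrightarrow> b - a < d \<longrightarrow> F b - F a \<le> (l + e) * (b - a)"
    if e: "e > 0" for e
  proof -
    obtain r where r: "r \<in> \<rat>" "l < r" "r < l + e/2" using Rats_dense_in_real[of l "l + e/2"] e by auto
    obtain s where s: "s \<in> \<rat>" "r < s" "s < l + e" using Rats_dense_in_real[of r "l + e"] r by auto
    have "\<exists>r'\<in>L. r' < r" using r(2) unfolding l_def using cInf_less_iff[OF ne bdd] by auto
    then obtain r' where "r' \<in> L" "r' < r" by auto
    then have "x \<in> lowset F r" unfolding L_def by (auto intro: lowset_mono)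
    then have "x \<notin> highset F s" using nb[OF r(1) s(1) s(2)] by auto
    then obtain d where d0: "d > 0" "\<not> (\<exists>a b. a < x \<and> x < b \<and> b - a < d \<and> F b - F a > s * (b - a))"
      unfolding highset_def by auto
    then have d: "d > 0" "\<forall>a b. a < x \<longrightarrow> x < b \<longrightarrow> b - a < d \<longrightarrow> F b - F a \<le> s * (b - a)"
      using not_less by blast+
    show ?thesis
    proof (intro exI[of _ d] conjI allI impI)
      fix a b assume "a < x" "x < b" "b - a < d"
      then have "F b - F a \<le> s * (b - a)" using d by auto
      also have "\<dots> \<le> (l + e) * (b - a)" using s \<open>a < x\<close> \<open>x < b\<close> by (intro mult_right_mono) auto
      finally show "F b - F a \<le> (l + e) * (b - a)" .
    qed (use d in auto)
  qed
  have C: "\<exists>d>0. \<forall>a b. a \<le> x \<longrightarrow> x \<le> b \<longrightarrow> a < b \<longrightarrow> b - a < d \<longrightarrow>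
            (l - e) * (b - a) \<le> F b - F a \<and> F b - F a \<le> (l + e) * (b - a)"
    if e: "e > 0" for e
  proof -
    obtain d1 where d1: "d1 > 0" "\<forall>a b. a < x \<longrightarrow> x < b \<longrightarrow> b - a < d1 \<longrightarrow> (l - e) * (b - a) \<le> F b - F a"
      using A[OF e] by auto
    obtain d2 where d2: "d2 > 0" "\<forall>a b. a < x \<longrightarrow> x < b \<longrightarrow> b - a < d2 \<longrightarrow> F b - F a \<le> (l + e) * (b - a)"
      using B[OF e] by auto
    show ?thesis
    proof (intro exI[of _ "min d1 d2"] conjI allI impI)
      fix a b assume ab: "a \<le> x" "x \<le> b" "a < b" "b - a < min d1 d2"
      have "(l - e) * (b - a) - \<eta> < F b - F a \<and> F b - F a < (l + e) * (b - a) + \<eta>" if eta: "\<eta> > 0" for \<eta>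
      proof -
        obtain a' b' where ab': "a' < x" "x < b'" "b' - a' = b - a" "\<bar>(F b' - F a') - (F b - F a)\<bar> < \<eta>"
          using shift_interval[OF lip mono ab(1,2,3) eta] by blast
        have "(l - e) * (b' - a') \<le> F b' - F a'" "F b' - F a' \<le> (l + e) * (b' - a')"
          using d1(2)[rule_format, of a' b'] d2(2)[rule_format, of a' b'] ab ab' by auto
        then show ?thesis using ab' by auto
      qed
      note H = this
      show "(l - e) * (b - a) \<le> F b - F a"
      proof (rule ccontr)
        assume "\<not> (l - e) * (b - a) \<le> F b - F a"
        then have "(l - e) * (b - a) - (F b - F a) > 0" by simp
        from H[OF this] show False by simp
      qed
      show "F b - F a \<le> (l + e) * (b - a)"
      proof (rule ccontr)
        assume "\<not> F b - F a \<le> (l + e) * (b - a)"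
        then have "(F b - F a) - (l + e) * (b - a) > 0" by simp
        from H[OF this] show False by simp
      qed
    qed (use d1 d2 in auto)
  qed
  have "DERIV F x :> l"
    unfolding DERIV_def
  proof (rule LIM_I)
    fix e :: real assume e: "e > 0"
    obtain d where d: "d > 0" and dd: "\<forall>a b. a \<le> x \<longrightarrow> x \<le> b \<longrightarrow> a < b \<longrightarrow> b - a < d \<longrightarrow>
            (l - e/2) * (b - a) \<le> F b - F a \<and> F b - F a \<le> (l + e/2) * (b - a)"
      using C[of "e/2"] e by auto
    show "\<exists>s>0. \<forall>h. h \<noteq> 0 \<and> norm (h - 0) < s \<longrightarrow> norm ((F (x + h) - F x) / h - l) < e"
    proof (intro exI[of _ d] conjI allI impI)
      fix h :: real assume h: "h \<noteq> 0 \<and> norm (h - 0) < d"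
      show "norm ((F (x + h) - F x) / h - l) < e"
      proof (cases "h > 0")
        case True
        then have "(l - e/2) * h \<le> F (x + h) - F x \<and> F (x + h) - F x \<le> (l + e/2) * h"
          using dd[rule_format, of x "x + h"] h by auto
        then have "l - e/2 \<le> (F (x + h) - F x) / h \<and> (F (x + h) - F x) / h \<le> l + e/2"
          using True by (simp add: field_simps)
        then show ?thesis using e by auto
      next
        case False
        then have hn: "h < 0" using h by auto
        then have "(l - e/2) * (-h) \<le> F x - F (x + h) \<and> F x - F (x + h) \<le> (l + e/2) * (-h)"
          using dd[rule_format, of "x + h" x] h by auto
        then have "l - e/2 \<le> (F (x + h) - F x) / h \<and> (F (x + h) - F x) / h \<le> l + e/2"
          using hn by (simp add: field_simps)
        then show ?thesis using e by auto
      qed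
    qed (use d in auto)
  qed
  then show ?thesis unfolding real_differentiable_def by blast
qed


lemma lip_cont:
  fixes F :: "real \<Rightarrow> real"
  assumes lip: "\<And>x y. x \<le> y \<Longrightarrow> F y - F x \<le> y - x"
    and mono: "\<And>x y. x \<le> y \<Longrightarrow> F x \<le> F y"
  shows "continuous_on UNIV F"
proof -
  have "1-lipschitz_on UNIV F"
  proof (rule lipschitz_onI)
    fix x y :: real
    show "dist (F x) (F y) \<le> 1 * dist x y"
    proof (cases "x \<le> y")
      case True then show ?thesis using lip[of x y] mono[of x y] by (simp add: dist_real_def)
    next
      case False then show ?thesis using lip[of y x] mono[of y x] by (simp add: dist_real_def)
    qed
  qed simp
  then show ?thesis by (rule lipschitz_on_continuous_on)
qed

lemma lip_rcont:
  fixes F :: "real \<Rightarrow> real"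
  assumes lip: "\<And>x y. x \<le> y \<Longrightarrow> F y - F x \<le> y - x"
    and mono: "\<And>x y. x \<le> y \<Longrightarrow> F x \<le> F y"
  shows "continuous (at_right a) F"
proof -
  have "isCont F a" using lip_cont[OF lip mono] by (simp add: continuous_on_eq_continuous_at)
  then show ?thesis by (rule continuous_at_imp_continuous_within)
qed

lemma sets_borel_Ioc: "sets borel = sigma_sets UNIV (range (\<lambda>(a, b). {a <.. b::real}))"
  by (subst borel_sigma_sets_Ioc) (rule sets_measure_of, simp)

lemma nu_le_lborel:
  fixes F :: "real \<Rightarrow> real"
  assumes lip: "\<And>x y. x \<le> y \<Longrightarrow> F y - F x \<le> y - x"
    and mono: "\<And>x y. x \<le> y \<Longrightarrow> F x \<le> F y"
    and A: "A \<in> sets borel" "A \<subseteq> {a0<..b0}" and ab0: "a0 \<le> b0"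
  shows "emeasure (interval_measure F) A \<le> emeasure lborel A"
proof -
  define G where "G x = x - F x" for x
  have monoG: "G x \<le> G y" if "x \<le> y" for x y using lip[OF that] by (simp add: G_def)
  have lipG: "G y - G x \<le> y - x" if "x \<le> y" for x y using mono[OF that] by (simp add: G_def)
  note rcF = lip_rcont[OF lip mono] and rcG = lip_rcont[OF lipG monoG]
  define J where "J = {a0<..b0}"
  define M1 where "M1 = interval_measure F"
  define M2 where "M2 = interval_measure G"
  have s1[simp]: "sets M1 = sets borel" and s2[simp]: "sets M2 = sets borel"
    by (simp_all add: M1_def M2_def)
  have J1: "emeasure M1 J = ennreal (F b0 - F a0)" unfolding M1_def J_def
    by (rule emeasure_interval_measure_Ioc[OF ab0 mono rcF])
  have J2: "emeasure M2 J = ennreal (G b0 - G a0)" unfolding M2_def J_def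
    by (rule emeasure_interval_measure_Ioc[OF ab0 monoG rcG])
  have Jb: "emeasure lborel J = ennreal (b0 - a0)" unfolding J_def using ab0 by simp
  have Jsets: "J \<in> sets borel" unfolding J_def by simp
  have fin1: "emeasure M1 X \<noteq> \<infinity>" if "X \<subseteq> J" "X \<in> sets borel" for X
  proof -
    have "emeasure M1 X \<le> emeasure M1 J" using that Jsets by (intro emeasure_mono) auto
    then show ?thesis using J1 by (auto simp: top_unique)
  qed
  have fin2: "emeasure M2 X \<noteq> \<infinity>" if "X \<subseteq> J" "X \<in> sets borel" for X
  proof -
    have "emeasure M2 X \<le> emeasure M2 J" using that Jsets by (intro emeasure_mono) auto
    then show ?thesis using J2 by (auto simp: top_unique)
  qed
  have finb: "emeasure lborel X \<noteq> \<infinity>" if "X \<subseteq> J" "X \<in> sets borel" for X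
  proof -
    have "emeasure lborel X \<le> emeasure lborel J" using that Jsets by (intro emeasure_mono) auto
    then show ?thesis using Jb by (auto simp: top_unique)
  qed
  let ?P = "\<lambda>A. measure M1 (A \<inter> J) + measure M2 (A \<inter> J) = measure lborel (A \<inter> J)"
  have basicP: "?P X" if "X \<in> range (\<lambda>(a, b). {a <.. b::real})" for X
  proof -
    from that obtain ab where "X = (\<lambda>(a, b). {a<..b::real}) ab" by blast
    then obtain a b where X: "X = {a<..b}" by (cases ab) auto
    define p where "p = max a a0"
    define q where "q = min b b0"
    have XJ: "X \<inter> J = {p<..q}" unfolding X J_def p_def q_def by simp
    show ?thesis
    proof (cases "p \<le> q")
      case True
      have "measure M1 {p<..q} = F q - F p" unfolding M1_def
        by (rule measure_interval_measure_Ioc[OF True mono rcF])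
      moreover have "measure M2 {p<..q} = G q - G p" unfolding M2_def
        by (rule measure_interval_measure_Ioc[OF True monoG rcG])
      moreover have "measure lborel {p<..q} = q - p" using True by simp
      ultimately show ?thesis unfolding XJ by (simp add: G_def)
    next
      case False
      then have "{p<..q} = {}" by auto
      then show ?thesis unfolding XJ by simp
    qed
  qed
  have PJ: "measure M1 J + measure M2 J = measure lborel J"
    using basicP[of J] unfolding J_def by auto
  have IS: "Int_stable (range (\<lambda>(a, b). {a <.. b::real}))"
    unfolding Int_stable_def by (auto intro!: image_eqI[of _ _ "(max _ _, min _ _)"])
  have PW: "range (\<lambda>(a, b). {a <.. b::real}) \<subseteq> Pow UNIV" by simp
  have AS: "A \<in> sigma_sets UNIV (range (\<lambda>(a, b). {a <.. b::real}))"
    using A(1) sets_borel_Ioc by simp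
  have "?P A"
    using IS PW AS
  proof (induction rule: sigma_sets_induct_disjoint)
  next
    case (basic X) then show ?case by (rule basicP)
  next
    case empty then show ?case by simp
  next
    case (compl X)
    have Xb: "X \<in> sets borel" using compl(1) sets_borel_Ioc by simp
    have XJb: "X \<inter> J \<in> sets borel" using Xb Jsets by auto
    have eq: "(UNIV - X) \<inter> J = J - (X \<inter> J)" by auto
    have "measure M1 (J - (X \<inter> J)) = measure M1 J - measure M1 (X \<inter> J)"
      by (rule measure_Diff) (use fin1[of J] Jsets XJb in auto)
    moreover have "measure M2 (J - (X \<inter> J)) = measure M2 J - measure M2 (X \<inter> J)"
      by (rule measure_Diff) (use fin2[of J] Jsets XJb in auto)
    moreover have "measure lborel (J - (X \<inter> J)) = measure lborel J - measure lborel (X \<inter> J)"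
      by (rule measure_Diff) (use finb[of J] Jsets XJb in auto)
    ultimately show ?case unfolding eq using compl(2) PJ by linarith
  next
    case (union X)
    have Xb: "X i \<in> sets borel" for i using union(2) sets_borel_Ioc by auto
    have eq: "(\<Union>i. X i) \<inter> J = (\<Union>i. X i \<inter> J)" by auto
    have dj: "disjoint_family (\<lambda>i. X i \<inter> J)" using union(1) by (auto simp: disjoint_family_on_def)
    have UJ: "(\<Union>i. X i \<inter> J) \<subseteq> J" "(\<Union>i. X i \<inter> J) \<in> sets borel" using Xb Jsets by auto
    have S1: "(\<lambda>i. measure M1 (X i \<inter> J)) sums measure M1 (\<Union>i. X i \<inter> J)"
      by (rule measure_UNION) (use Xb Jsets dj fin1[OF UJ] in auto)
    have S2: "(\<lambda>i. measure M2 (X i \<inter> J)) sums measure M2 (\<Union>i. X i \<inter> J)"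
      by (rule measure_UNION) (use Xb Jsets dj fin2[OF UJ] in auto)
    have S3: "(\<lambda>i. measure lborel (X i \<inter> J)) sums measure lborel (\<Union>i. X i \<inter> J)"
      by (rule measure_UNION) (use Xb Jsets dj finb[OF UJ] in auto)
    have S12: "(\<lambda>i. measure M1 (X i \<inter> J) + measure M2 (X i \<inter> J)) sums
          (measure M1 (\<Union>i. X i \<inter> J) + measure M2 (\<Union>i. X i \<inter> J))"
      by (rule sums_add[OF S1 S2])
    have "(\<lambda>i. measure M1 (X i \<inter> J) + measure M2 (X i \<inter> J)) = (\<lambda>i. measure lborel (X i \<inter> J))"
      using union(3) by simp
    with S12 have S12': "(\<lambda>i. measure lborel (X i \<inter> J)) sums
          (measure M1 (\<Union>i. X i \<inter> J) + measure M2 (\<Union>i. X i \<inter> J))" by simp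
    from sums_unique2[OF S12' S3] show ?case unfolding eq .
  qed
  moreover have AJ: "A \<inter> J = A" using A(2) unfolding J_def by auto
  ultimately have eqA: "measure M1 A + measure M2 A = measure lborel A" by simp
  have "measure M1 A \<le> measure lborel A" using eqA measure_nonneg[of M2 A] by linarith
  moreover have "emeasure M1 A = ennreal (measure M1 A)"
    by (rule emeasure_eq_ennreal_measure) (use fin1[of A] A J_def in auto)
  moreover have "emeasure lborel A = ennreal (measure lborel A)"
    by (rule emeasure_eq_ennreal_measure) (use finb[of A] A J_def in auto)
  ultimately show ?thesis unfolding M1_def by (simp add: ennreal_leI)
qed


lemma lebesgue_eq_lborel: "X \<in> sets borel \<Longrightarrow> emeasure lebesgue X = emeasure (lborel::real measure) X"
  by simp

lemma negligible_borel_zero: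
  fixes X :: "real set"
  assumes "X \<in> sets borel" "negligible X" shows "emeasure lborel X = 0"
proof -
  have "X \<in> null_sets lebesgue" using assms(2) negligible_iff_null_sets by auto
  then have "emeasure lebesgue X = 0" by auto
  then show ?thesis using assms(1) by simp
qed

lemma vitali_intervals:
  fixes E V :: "real set"
  assumes V: "open V" "E \<subseteq> V"
    and H: "\<And>x d. x \<in> E \<Longrightarrow> d > 0 \<Longrightarrow> \<exists>a b. a < x \<and> x < b \<and> b - a < d \<and> Q a b"
  obtains C where "countable C" "\<And>i. i \<in> C \<Longrightarrow> fst i < snd i \<and> {fst i..snd i} \<subseteq> V \<and> Q (fst i) (snd i)"
    "pairwise (\<lambda>i j. disjnt {fst i..snd i} {fst j..snd j}) C"
    "negligible (E - (\<Union>i\<in>C. {fst i..snd i}))"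
proof -
  define K where "K = {(c, \<rho>). 0 < \<rho> \<and> cball c \<rho> \<subseteq> V \<and> Q (c - \<rho>) (c + \<rho>)}"
  have Kr: "\<And>i. i \<in> K \<Longrightarrow> 0 < snd i" unfolding K_def by auto
  have KS: "\<exists>i. i \<in> K \<and> x \<in> cball (fst i) (snd i) \<and> snd i < d" if x: "x \<in> E" and d: "0 < d" for x d
  proof -
    obtain \<delta> where \<delta>: "\<delta> > 0" "ball x \<delta> \<subseteq> V" using V x open_contains_ball by blast
    obtain a b where ab: "a < x" "x < b" "b - a < min d \<delta>" "Q a b" using H[OF x, of "min d \<delta>"] d \<delta> by auto
    define c where "c = (a + b) / 2"
    define \<rho> where "\<rho> = (b - a) / 2"
    have cb: "cball c \<rho> = {a..b}" unfolding cball_eq_atLeastAtMost c_def \<rho>_def by (simp add: field_simps)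
    have "{a..b} \<subseteq> ball x \<delta>" using ab by (auto simp: dist_real_def)
    then have "(c, \<rho>) \<in> K" unfolding K_def using ab \<delta> cb by (auto simp: c_def \<rho>_def field_simps)
    moreover have "x \<in> cball c \<rho>" using cb ab by auto
    moreover have "\<rho> < d" using ab by (simp add: \<rho>_def)
    ultimately show ?thesis by (intro exI[of _ "(c, \<rho>)"]) auto
  qed
  obtain C' where C': "countable C'" "C' \<subseteq> K"
    "pairwise (\<lambda>i j. disjnt (cball (fst i) (snd i)) (cball (fst j) (snd j))) C'"
    "negligible (E - (\<Union>i\<in>C'. cball (fst i) (snd i)))"
    by (rule Vitali_covering_theorem_cballs[where K=K and r=snd and a=fst and S=E, OF Kr KS]) auto
  define f where "f = (\<lambda>i::real\<times>real. (fst i - snd i, fst i + snd i))"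
  have fb: "{fst (f i)..snd (f i)} = cball (fst i) (snd i)" for i
    unfolding f_def cball_eq_atLeastAtMost by simp
  show ?thesis
  proof (rule that[of "f ` C'"])
    show "countable (f ` C')" using C'(1) by simp
    show "fst i < snd i \<and> {fst i..snd i} \<subseteq> V \<and> Q (fst i) (snd i)" if iC: "i \<in> f ` C'" for i
    proof -
      obtain j where j: "j \<in> C'" "i = f j" using iC by blast
      then have "j \<in> K" using C'(2) by auto
      then show ?thesis using j fb[of j] unfolding K_def f_def by auto
    qed
    show "pairwise (\<lambda>i j. disjnt {fst i..snd i} {fst j..snd j}) (f ` C')"
    proof (rule pairwise_imageI)
      fix x y assume "x \<in> C'" "y \<in> C'" "x \<noteq> y" "f x \<noteq> f y"
      then have "disjnt (cball (fst x) (snd x)) (cball (fst y) (snd y))"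
        using C'(3) unfolding pairwise_def by auto
      then show "disjnt {fst (f x)..snd (f x)} {fst (f y)..snd (f y)}" unfolding fb .
    qed
    have "(\<Union>i\<in>f ` C'. {fst i..snd i}) = (\<Union>i\<in>C'. cball (fst i) (snd i))"
      using fb by auto
    then show "negligible (E - (\<Union>i\<in>f ` C'. {fst i..snd i}))" using C'(4) by simp
  qed
qed


lemma interval_sums:
  fixes C :: "(real \<times> real) set" and M :: "real measure"
  assumes sM: "sets M = sets borel" and C: "countable C"
    and pw: "pairwise (\<lambda>i j. disjnt {fst i..snd i} {fst j..snd j}) C"
  shows "emeasure M (\<Union>i\<in>C. {fst i..snd i}) = (\<integral>\<^sup>+i. emeasure M {fst i..snd i} \<partial>count_space C)"
proof (rule emeasure_UN_countable)
  show "disjoint_family_on (\<lambda>i. {fst i..snd i}) C"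
    using pw unfolding disjoint_family_on_def pairwise_def disjnt_def by auto
qed (use sM C in auto)

lemma vitali_low:
  fixes F :: "real \<Rightarrow> real"
  assumes lip: "\<And>x y. x \<le> y \<Longrightarrow> F y - F x \<le> y - x"
    and mono: "\<And>x y. x \<le> y \<Longrightarrow> F x \<le> F y"
    and E: "E \<in> sets borel" "E \<subseteq> {0<..<1}" "E \<subseteq> lowset F r" and r: "r > 0"
  shows "emeasure (interval_measure F) E \<le> ennreal r * emeasure lborel E"
proof (rule ennreal_le_epsilon)
  fix e :: real assume e: "0 < e"
  define \<nu> where "\<nu> = interval_measure F"
  have s\<nu>[simp]: "sets \<nu> = sets borel" by (simp add: \<nu>_def)
  define \<epsilon> where "\<epsilon> = e / r"
  have \<epsilon>: "\<epsilon> > 0" using e r by (simp add: \<epsilon>_def)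
  have El: "E \<in> sets lebesgue" using E(1) by simp
  obtain T where T: "open T" "E \<subseteq> T" "emeasure lebesgue (T - E) < ennreal \<epsilon>"
    using sets_lebesgue_outer_open[OF El \<epsilon>] by metis
  define V where "V = T \<inter> {0<..<1}"
  have V: "open V" "E \<subseteq> V" "V \<in> sets borel" using T E by (auto simp: V_def)
  have Tb: "T \<in> sets borel" using T(1) by simp
  have TE: "T - E \<in> sets borel" using Tb E by auto
  have "emeasure lborel V \<le> emeasure lborel (E \<union> (T - E))"
    using V TE E Tb by (intro emeasure_mono) (auto simp: V_def)
  also have "\<dots> \<le> emeasure lborel E + emeasure lborel (T - E)"
    using TE E by (intro emeasure_subadditive) auto
  also have "emeasure lborel (T - E) = emeasure lebesgue (T - E)" using TE by simp
  finally have lV: "emeasure lborel V \<le> emeasure lborel E + ennreal \<epsilon>"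
    using T(3) by (meson add_left_mono less_imp_le order_trans)
  have H: "\<exists>a b. a < x \<and> x < b \<and> b - a < d \<and> F b - F a \<le> r * (b - a)" if xE: "x \<in> E" and d: "d > 0" for x d
  proof -
    have "x \<in> lowset F r" using xE E by auto
    then obtain a b where "a < x" "x < b" "b - a < d" "F b - F a < r * (b - a)"
      using d unfolding lowset_def by blast
    then show ?thesis by (intro exI[of _ a] exI[of _ b]) auto
  qed
  obtain C where C: "countable C"
    "\<And>i. i \<in> C \<Longrightarrow> fst i < snd i \<and> {fst i..snd i} \<subseteq> V \<and> F (snd i) - F (fst i) \<le> r * (snd i - fst i)"
    "pairwise (\<lambda>i j. disjnt {fst i..snd i} {fst j..snd j}) C"
    "negligible (E - (\<Union>i\<in>C. {fst i..snd i}))"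
    by (rule vitali_intervals[OF V(1,2), where Q="\<lambda>a b. F b - F a \<le> r * (b - a)", OF H]) blast+
  define U where "U = (\<Union>i\<in>C. {fst i..snd i})"
  have Ub: "U \<in> sets borel" unfolding U_def using C(1) by (intro sets.countable_UN'') auto
  have UV: "U \<subseteq> V" using C(2) unfolding U_def by blast
  define N where "N = E - U"
  have Nb: "N \<in> sets borel" using Ub E by (auto simp: N_def)
  have N0: "emeasure lborel N = 0" using negligible_borel_zero[OF Nb] C(4) by (simp add: N_def U_def)
  have "emeasure \<nu> N \<le> emeasure lborel N" unfolding \<nu>_def
    by (rule nu_le_lborel[OF lip mono Nb, of 0 1]) (use E in \<open>auto simp: N_def\<close>)
  then have \<nu>N: "emeasure \<nu> N = 0" using N0 by simp
  have "emeasure \<nu> E \<le> emeasure \<nu> (U \<union> N)" using Ub Nb E(1) by (intro emeasure_mono) (auto simp: N_def)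
  also have "\<dots> \<le> emeasure \<nu> U + emeasure \<nu> N" using Ub Nb by (intro emeasure_subadditive) auto
  also have "\<dots> = emeasure \<nu> U" using \<nu>N by simp
  also have "\<dots> = (\<integral>\<^sup>+i. emeasure \<nu> {fst i..snd i} \<partial>count_space C)"
    unfolding U_def by (rule interval_sums[OF s\<nu> C(1,3)])
  also have "\<dots> \<le> (\<integral>\<^sup>+i. ennreal r * emeasure lborel {fst i..snd i} \<partial>count_space C)"
  proof (rule nn_integral_mono)
    fix i assume "i \<in> space (count_space C)"
    then have i: "fst i < snd i" "F (snd i) - F (fst i) \<le> r * (snd i - fst i)" using C(2) by auto
    have "emeasure \<nu> {fst i..snd i} = ennreal (F (snd i) - F (fst i))" unfolding \<nu>_def
      by (rule emeasure_interval_measure_Icc) (use i mono lip_cont[OF lip mono] in auto)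
    also have "\<dots> \<le> ennreal (r * (snd i - fst i))" using i by (intro ennreal_leI) auto
    also have "\<dots> = ennreal r * emeasure lborel {fst i..snd i}" using i r by (simp add: ennreal_mult)
    finally show "emeasure \<nu> {fst i..snd i} \<le> ennreal r * emeasure lborel {fst i..snd i}" .
  qed
  also have "\<dots> = ennreal r * (\<integral>\<^sup>+i. emeasure lborel {fst i..snd i} \<partial>count_space C)"
    by (rule nn_integral_cmult) simp
  also have "(\<integral>\<^sup>+i. emeasure lborel {fst i..snd i} \<partial>count_space C) = emeasure lborel U"
    unfolding U_def by (rule interval_sums[symmetric]) (use C in auto)
  also have "ennreal r * emeasure lborel U \<le> ennreal r * (emeasure lborel E + ennreal \<epsilon>)"
  proof (rule mult_left_mono)
    have "emeasure lborel U \<le> emeasure lborel V" using UV V by (intro emeasure_mono) auto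
    then show "emeasure lborel U \<le> emeasure lborel E + ennreal \<epsilon>" using lV by simp
  qed simp
  also have "\<dots> = ennreal r * emeasure lborel E + ennreal e"
    using r e by (simp add: distrib_left ennreal_mult[symmetric] \<epsilon>_def)
  finally show "emeasure (interval_measure F) E \<le> ennreal r * emeasure lborel E + ennreal e"
    unfolding \<nu>_def .
qed


lemma vitali_high:
  fixes F :: "real \<Rightarrow> real"
  assumes lip: "\<And>x y. x \<le> y \<Longrightarrow> F y - F x \<le> y - x"
    and mono: "\<And>x y. x \<le> y \<Longrightarrow> F x \<le> F y"
    and E: "E \<in> sets borel" "E \<subseteq> {0<..<1}" "E \<subseteq> highset F s" and s: "s > 0"
  shows "ennreal s * emeasure lborel E \<le> emeasure (interval_measure F) E"
proof (rule ennreal_le_epsilon)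
  fix e :: real assume e: "0 < e"
  define \<nu> where "\<nu> = interval_measure F"
  have s\<nu>[simp]: "sets \<nu> = sets borel" by (simp add: \<nu>_def)
  have El: "E \<in> sets lebesgue" using E(1) by simp
  obtain T where T: "open T" "E \<subseteq> T" "emeasure lebesgue (T - E) < ennreal e"
    using sets_lebesgue_outer_open[OF El e] by metis
  define V where "V = T \<inter> {0<..<1}"
  have V: "open V" "E \<subseteq> V" "V \<in> sets borel" using T E by (auto simp: V_def)
  have Tb: "T \<in> sets borel" using T(1) by simp
  have VE: "V - E \<in> sets borel" using V E by auto
  have "emeasure \<nu> (V - E) \<le> emeasure lborel (V - E)" unfolding \<nu>_def
    by (rule nu_le_lborel[OF lip mono VE, of 0 1]) (auto simp: V_def)
  also have "\<dots> \<le> emeasure lborel (T - E)" using Tb E by (intro emeasure_mono) (auto simp: V_def)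
  also have "\<dots> = emeasure lebesgue (T - E)" using Tb E by simp
  finally have \<nu>VE: "emeasure \<nu> (V - E) \<le> ennreal e" using T(3) by simp
  have H: "\<exists>a b. a < x \<and> x < b \<and> b - a < d \<and> F b - F a \<ge> s * (b - a)" if xE: "x \<in> E" and d: "d > 0" for x d
  proof -
    have "x \<in> highset F s" using xE E by auto
    then obtain a b where "a < x" "x < b" "b - a < d" "F b - F a > s * (b - a)"
      using d unfolding highset_def by blast
    then show ?thesis by (intro exI[of _ a] exI[of _ b]) auto
  qed
  obtain C where C: "countable C"
    "\<And>i. i \<in> C \<Longrightarrow> fst i < snd i \<and> {fst i..snd i} \<subseteq> V \<and> F (snd i) - F (fst i) \<ge> s * (snd i - fst i)"
    "pairwise (\<lambda>i j. disjnt {fst i..snd i} {fst j..snd j}) C"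
    "negligible (E - (\<Union>i\<in>C. {fst i..snd i}))"
    by (rule vitali_intervals[OF V(1,2), where Q="\<lambda>a b. F b - F a \<ge> s * (b - a)", OF H]) blast+
  define U where "U = (\<Union>i\<in>C. {fst i..snd i})"
  have Ub: "U \<in> sets borel" unfolding U_def using C(1) by (intro sets.countable_UN'') auto
  have UV: "U \<subseteq> V" using C(2) unfolding U_def by blast
  define N where "N = E - U"
  have Nb: "N \<in> sets borel" using Ub E by (auto simp: N_def)
  have N0: "emeasure lborel N = 0" using negligible_borel_zero[OF Nb] C(4) by (simp add: N_def U_def)
  have "emeasure lborel E \<le> emeasure lborel (U \<union> N)" using Ub Nb E(1) by (intro emeasure_mono) (auto simp: N_def)
  also have "\<dots> \<le> emeasure lborel U + emeasure lborel N" using Ub Nb by (intro emeasure_subadditive) auto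
  also have "\<dots> = emeasure lborel U" using N0 by simp
  finally have EU: "emeasure lborel E \<le> emeasure lborel U" .
  have "ennreal s * emeasure lborel E \<le> ennreal s * emeasure lborel U"
    using EU by (rule mult_left_mono) simp
  also have "emeasure lborel U = (\<integral>\<^sup>+i. emeasure lborel {fst i..snd i} \<partial>count_space C)"
    unfolding U_def by (rule interval_sums) (use C in auto)
  also have "ennreal s * \<dots> = (\<integral>\<^sup>+i. ennreal s * emeasure lborel {fst i..snd i} \<partial>count_space C)"
    by (rule nn_integral_cmult[symmetric]) simp
  also have "\<dots> \<le> (\<integral>\<^sup>+i. emeasure \<nu> {fst i..snd i} \<partial>count_space C)"
  proof (rule nn_integral_mono)
    fix i assume "i \<in> space (count_space C)"
    then have i: "fst i < snd i" "F (snd i) - F (fst i) \<ge> s * (snd i - fst i)" using C(2) by auto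
    have "ennreal s * emeasure lborel {fst i..snd i} = ennreal (s * (snd i - fst i))"
      using i s by (simp add: ennreal_mult)
    also have "\<dots> \<le> ennreal (F (snd i) - F (fst i))" using i by (intro ennreal_leI) auto
    also have "\<dots> = emeasure \<nu> {fst i..snd i}" unfolding \<nu>_def
      by (rule emeasure_interval_measure_Icc[symmetric]) (use i mono lip_cont[OF lip mono] in auto)
    finally show "ennreal s * emeasure lborel {fst i..snd i} \<le> emeasure \<nu> {fst i..snd i}" .
  qed
  also have "\<dots> = emeasure \<nu> U"
    unfolding U_def by (rule interval_sums[symmetric]) (use C in auto)
  also have "\<dots> \<le> emeasure \<nu> V" using UV V by (intro emeasure_mono) auto
  also have "\<dots> \<le> emeasure \<nu> (E \<union> (V - E))" using V E VE by (intro emeasure_mono) auto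
  also have "\<dots> \<le> emeasure \<nu> E + emeasure \<nu> (V - E)" using VE E by (intro emeasure_subadditive) auto
  also have "\<dots> \<le> emeasure \<nu> E + ennreal e" using \<nu>VE by (rule add_left_mono)
  finally show "ennreal s * emeasure lborel E \<le> emeasure (interval_measure F) E + ennreal e"
    unfolding \<nu>_def .
qed

lemma negligible_lowhigh:
  fixes F :: "real \<Rightarrow> real"
  assumes lip: "\<And>x y. x \<le> y \<Longrightarrow> F y - F x \<le> y - x"
    and mono: "\<And>x y. x \<le> y \<Longrightarrow> F x \<le> F y"
    and rs: "r < s"
  shows "negligible (lowset F r \<inter> highset F s \<inter> {0<..<1})"
proof (cases "r > 0")
  case False
  have "lowset F r = {}"
  proof (rule ccontr)
    assume "lowset F r \<noteq> {}"
    then obtain x where "x \<in> lowset F r" by auto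
    then obtain a b where ab: "a < x" "x < b" "F b - F a < r * (b - a)"
      unfolding lowset_def by (auto dest: spec[of _ 1])
    have "r * (b - a) \<le> 0" using False ab by (intro mult_nonpos_nonneg) auto
    then show False using mono[of a b] ab by auto
  qed
  then show ?thesis by simp
next
  case True
  define E where "E = lowset F r \<inter> highset F s \<inter> {0<..<1}"
  have Eb: "E \<in> sets borel" unfolding E_def using lowset_borel highset_borel by auto
  have "ennreal s * emeasure lborel E \<le> emeasure (interval_measure F) E"
    by (rule vitali_high[OF lip mono Eb]) (use rs True in \<open>auto simp: E_def\<close>)
  also have "\<dots> \<le> ennreal r * emeasure lborel E"
    by (rule vitali_low[OF lip mono Eb]) (use rs True in \<open>auto simp: E_def\<close>)
  finally have le: "ennreal s * emeasure lborel E \<le> ennreal r * emeasure lborel E" .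
  have "emeasure lborel E \<le> emeasure lborel {0<..<(1::real)}" using Eb by (intro emeasure_mono) (auto simp: E_def)
  then have fin: "emeasure lborel E \<noteq> top" by (auto simp: top_unique)
  then have eq: "emeasure lborel E = ennreal (measure lborel E)" by (rule emeasure_eq_ennreal_measure)
  have "s * measure lborel E \<le> r * measure lborel E"
    using le unfolding eq using True rs by (simp add: ennreal_mult[symmetric] ennreal_le_iff)
  then have "measure lborel E \<le> 0" using rs
    by (metis diff_ge_0_iff_ge le_iff_diff_le_0 linorder_not_less mult_le_cancel_right)
  then have "emeasure lborel E = 0" using eq measure_nonneg[of lborel E] by simp
  then have "E \<in> null_sets lborel" using Eb by auto
  then have "E \<in> null_sets lebesgue" by (rule null_sets_completionI)
  then show ?thesis unfolding E_def[symmetric] negligible_iff_null_sets .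
qed

theorem lip_mono_ae_differentiable:
  fixes F :: "real \<Rightarrow> real"
  assumes lip: "\<And>x y. x \<le> y \<Longrightarrow> F y - F x \<le> y - x"
    and mono: "\<And>x y. x \<le> y \<Longrightarrow> F x \<le> F y"
  shows "negligible {x \<in> {0<..<1}. \<not> F differentiable (at x)}"
proof -
  define \<N> where "\<N> = (\<lambda>(r, s). if r < s then lowset F r \<inter> highset F s \<inter> {0<..<1} else {}) ` (\<rat> \<times> \<rat>)"
  have "countable \<N>" unfolding \<N>_def using countable_rat by auto
  moreover have "negligible S" if "S \<in> \<N>" for S
    using that negligible_lowhigh[OF lip mono] unfolding \<N>_def by auto
  ultimately have "negligible (\<Union>\<N>)" by (rule negligible_countable_Union)
  moreover have "{x \<in> {0<..<1}. \<not> F differentiable (at x)} \<subseteq> \<Union>\<N>"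
  proof
    fix x assume x: "x \<in> {x \<in> {0<..<1}. \<not> F differentiable (at x)}"
    then obtain r s where rs: "r \<in> \<rat>" "s \<in> \<rat>" "r < s" "x \<in> lowset F r" "x \<in> highset F s"
      using diff_point[OF lip mono, of x] by auto
    then have "x \<in> lowset F r \<inter> highset F s \<inter> {0<..<1}" using x by auto
    moreover have "lowset F r \<inter> highset F s \<inter> {0<..<1} \<in> \<N>"
      unfolding \<N>_def using rs by (intro image_eqI[of _ _ "(r, s)"]) auto
    ultimately show "x \<in> \<Union>\<N>" by blast
  qed
  ultimately show ?thesis by (rule negligible_subset)
qed


definition dq :: "(real \<Rightarrow> real) \<Rightarrow> nat \<Rightarrow> real \<Rightarrow> real" where
  "dq F n x = real (Suc n) * (F (x + 1 / real (Suc n)) - F x)"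

context
  fixes F :: "real \<Rightarrow> real"
  assumes lip: "\<And>x y. x \<le> y \<Longrightarrow> F y - F x \<le> y - x"
    and mono: "\<And>x y. x \<le> y \<Longrightarrow> F x \<le> F y"
begin

lemma dq_bounds: "0 \<le> dq F n x" "dq F n x \<le> 1"
proof -
  define \<delta> where "\<delta> = 1 / real (Suc n)"
  have \<delta>: "\<delta> > 0" "real (Suc n) * \<delta> = 1" by (simp_all add: \<delta>_def)
  have "0 \<le> F (x + \<delta>) - F x" "F (x + \<delta>) - F x \<le> \<delta>" using mono[of x "x+\<delta>"] lip[of x "x+\<delta>"] \<delta> by auto
  then have "0 \<le> real (Suc n) * (F (x + \<delta>) - F x)" "real (Suc n) * (F (x + \<delta>) - F x) \<le> real (Suc n) * \<delta>"
    by (auto intro: mult_left_mono)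
  then show "0 \<le> dq F n x" "dq F n x \<le> 1" using \<delta> unfolding dq_def \<delta>_def by auto
qed

lemma F_cont: "continuous_on S F"
  using lip_cont[OF lip mono] by (meson continuous_on_subset subset_UNIV)

lemma dq_cont: "continuous_on S (dq F n)"
  unfolding dq_def by (intro continuous_intros continuous_on_compose2[OF F_cont[of UNIV]]) auto

lemma int_F_near:
  assumes d: "d > 0"
  shows "d * F b \<le> integral {b..b+d} F" "integral {b..b+d} F \<le> d * (F b + d)"
proof -
  have int: "F integrable_on {b..b+d}" by (rule integrable_continuous_interval[OF F_cont])
  have "integral {b..b+d} (\<lambda>x. F b) \<le> integral {b..b+d} F"
    by (rule integral_le[OF _ int]) (auto intro: mono)
  then show "d * F b \<le> integral {b..b+d} F" using d by simp
  have "integral {b..b+d} F \<le> integral {b..b+d} (\<lambda>x. F b + d)"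
  proof (rule integral_le[OF int])
    fix x assume "x \<in> {b..b+d}"
    then show "F x \<le> F b + d" using lip[of b x] by auto
  qed (intro integrable_continuous_interval continuous_intros)
  then show "integral {b..b+d} F \<le> d * (F b + d)" using d by simp
qed

lemma dq_integral:
  assumes ab: "a \<le> b"
  shows "\<bar>integral {a..b} (dq F n) - (F b - F a)\<bar> \<le> 1 / real (Suc n)"
proof -
  define \<delta> where "\<delta> = 1 / real (Suc n)"
  have \<delta>: "\<delta> > 0" "real (Suc n) * \<delta> = 1" by (simp_all add: \<delta>_def)
  have intF: "F integrable_on {x..y}" for x y by (rule integrable_continuous_interval[OF F_cont])
  have shift: "integral {a..b} (\<lambda>x. F (x + \<delta>)) = integral {a+\<delta>..b+\<delta>} F"
    using integral_shift_cbox_plus[of a b F \<delta>] by (simp add: o_def add.commute)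
  have "integral {a..b} (dq F n) = real (Suc n) * (integral {a..b} (\<lambda>x. F (x + \<delta>)) - integral {a..b} F)"
  proof -
    have i1: "(\<lambda>x. F (x + \<delta>)) integrable_on {a..b}"
      by (intro integrable_continuous_interval continuous_on_compose2[OF F_cont[of UNIV]] continuous_intros) auto
    have "integral {a..b} (dq F n) = integral {a..b} (\<lambda>x. real (Suc n) * (F (x + \<delta>) - F x))"
      unfolding dq_def \<delta>_def by simp
    also have "\<dots> = real (Suc n) * integral {a..b} (\<lambda>x. F (x + \<delta>) - F x)" by simp
    also have "integral {a..b} (\<lambda>x. F (x + \<delta>) - F x) = integral {a..b} (\<lambda>x. F (x + \<delta>)) - integral {a..b} F"
      by (rule integral_diff[OF i1 intF])
    finally show ?thesis .
  qed
  also have "integral {a..b} (\<lambda>x. F (x + \<delta>)) - integral {a..b} F = integral {b..b+\<delta>} F - integral {a..a+\<delta>} F"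
  proof -
    have "integral {a..a+\<delta>} F + integral {a+\<delta>..b+\<delta>} F = integral {a..b+\<delta>} F"
      by (rule Henstock_Kurzweil_Integration.integral_combine) (use ab \<delta> intF in auto)
    moreover have "integral {a..b} F + integral {b..b+\<delta>} F = integral {a..b+\<delta>} F"
      by (rule Henstock_Kurzweil_Integration.integral_combine) (use ab \<delta> intF in auto)
    ultimately show ?thesis unfolding shift by linarith
  qed
  finally have eq: "integral {a..b} (dq F n) = real (Suc n) * integral {b..b+\<delta>} F - real (Suc n) * integral {a..a+\<delta>} F"
    by (simp add: right_diff_distrib)
  define k where "k = real (Suc n)"
  have k: "k * \<delta> = 1" "k > 0" using \<delta> by (simp_all add: k_def)
  have s: "k * (\<delta> * y) = y" for y using k by (simp add: mult.assoc[symmetric])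
  note ib = int_F_near[OF \<delta>(1), of b] and ia = int_F_near[OF \<delta>(1), of a]
  have b1: "k * integral {b..b+\<delta>} F \<ge> F b" "k * integral {b..b+\<delta>} F \<le> F b + \<delta>"
    "k * integral {a..a+\<delta>} F \<ge> F a" "k * integral {a..a+\<delta>} F \<le> F a + \<delta>"
    using mult_left_mono[OF ib(1), of k] mult_left_mono[OF ib(2), of k]
      mult_left_mono[OF ia(1), of k] mult_left_mono[OF ia(2), of k] k s[of "F b"] s[of "F a"]
      s[of "F b + \<delta>"] s[of "F a + \<delta>"] by auto
  have eq': "integral {a..b} (dq F n) = k * integral {b..b+\<delta>} F - k * integral {a..a+\<delta>} F"
    unfolding eq k_def ..
  have "\<bar>integral {a..b} (dq F n) - (F b - F a)\<bar> \<le> \<delta>" unfolding eq' abs_le_iff using b1 by linarith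
  then show ?thesis by (simp add: \<delta>_def)
qed

lemma dq_integral_lim:
  assumes ab: "a \<le> b"
  shows "(\<lambda>n. integral {a..b} (dq F n)) \<longlonglongrightarrow> F b - F a"
proof (rule real_tendsto_sandwich[where f="\<lambda>n. F b - F a - 1 / real (Suc n)" and h="\<lambda>n. F b - F a + 1 / real (Suc n)"])
  show "\<forall>\<^sub>F n in sequentially. F b - F a - 1 / real (Suc n) \<le> integral {a..b} (dq F n)"
  proof (intro always_eventually allI)
    fix n show "F b - F a - 1 / real (Suc n) \<le> integral {a..b} (dq F n)"
      using dq_integral[OF ab, of n] unfolding abs_le_iff by linarith
  qed
  show "\<forall>\<^sub>F n in sequentially. integral {a..b} (dq F n) \<le> F b - F a + 1 / real (Suc n)"
  proof (intro always_eventually allI)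
    fix n show "integral {a..b} (dq F n) \<le> F b - F a + 1 / real (Suc n)"
      using dq_integral[OF ab, of n] unfolding abs_le_iff by linarith
  qed
  have "(\<lambda>n. 1 / real (Suc n)) \<longlonglongrightarrow> 0" by (rule LIMSEQ_Suc[OF lim_const_over_n]) 
  then show "(\<lambda>n. F b - F a - 1 / real (Suc n)) \<longlonglongrightarrow> F b - F a"
    "(\<lambda>n. F b - F a + 1 / real (Suc n)) \<longlonglongrightarrow> F b - F a"
    using tendsto_diff[OF tendsto_const] tendsto_add[OF tendsto_const] by fastforce+
qed

lemma dq_lim:
  assumes "F differentiable (at x)"
  shows "(\<lambda>n. dq F n x) \<longlonglongrightarrow> deriv F x"
proof -
  have "DERIV F x :> deriv F x" using assms DERIV_deriv_iff_real_differentiable by blast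
  then have L: "(\<lambda>h. (F (x + h) - F x) / h) \<midarrow>0\<rightarrow> deriv F x" by (simp add: DERIV_def)
  have S: "(\<lambda>n. 1 / real (Suc n)) \<longlonglongrightarrow> 0" by (rule LIMSEQ_Suc[OF lim_const_over_n])
  have H: "\<forall>S. (\<forall>n. S n \<noteq> 0) \<and> S \<longlonglongrightarrow> 0 \<longrightarrow> (\<lambda>n. (\<lambda>h. (F (x + h) - F x) / h) (S n)) \<longlonglongrightarrow> deriv F x"
    by (rule iffD2[OF LIMSEQ_SEQ_conv L])
  have "(\<lambda>n. (\<lambda>h. (F (x + h) - F x) / h) (1 / real (Suc n))) \<longlonglongrightarrow> deriv F x"
    using H[rule_format, of "\<lambda>n. 1 / real (Suc n)"] S by simp
  moreover have "(\<lambda>n. (\<lambda>h. (F (x + h) - F x) / h) (1 / real (Suc n))) = (\<lambda>n. dq F n x)"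
    by (simp add: dq_def mult.commute)
  ultimately show ?thesis by simp
qed

lemma deriv_bounds:
  assumes "F differentiable (at x)"
  shows "0 \<le> deriv F x" "deriv F x \<le> 1"
  using LIMSEQ_le_const[OF dq_lim[OF assms]] LIMSEQ_le_const2[OF dq_lim[OF assms]] dq_bounds by auto

end


context
  fixes F :: "real \<Rightarrow> real"
  assumes lip: "\<And>x y. x \<le> y \<Longrightarrow> F y - F x \<le> y - x"
    and mono: "\<And>x y. x \<le> y \<Longrightarrow> F x \<le> F y"
begin

lemma neg_ab:
  assumes "0 \<le> a" "b \<le> 1"
  shows "negligible ({a..b} - {x \<in> {a..b}. x \<in> {0<..<1} \<and> F differentiable (at x)})"
proof -
  have "negligible ({x \<in> {0<..<1}. \<not> F differentiable (at x)} \<union> {0, 1})"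
    using lip_mono_ae_differentiable[OF lip mono] by (intro negligible_Un) auto
  moreover have "{a..b} - {x \<in> {a..b}. x \<in> {0<..<1} \<and> F differentiable (at x)} \<subseteq>
      {x \<in> {0<..<1}. \<not> F differentiable (at x)} \<union> {0, 1}"
    using assms by auto
  ultimately show ?thesis by (rule negligible_subset)
qed

lemma dc_ab:
  fixes f :: "nat \<Rightarrow> real \<Rightarrow> real" and g :: "real \<Rightarrow> real"
  assumes ab: "0 \<le> a" "b \<le> 1"
    and fi: "\<And>k. f k integrable_on {a..b}"
    and fb: "\<And>k x. \<bar>f k x\<bar> \<le> 1"
    and fl: "\<And>x. x \<in> {0<..<1} \<Longrightarrow> F differentiable (at x) \<Longrightarrow> (\<lambda>k. f k x) \<longlonglongrightarrow> g x"
  shows "g integrable_on {a..b}" "(\<lambda>k. integral {a..b} (f k)) \<longlonglongrightarrow> integral {a..b} g"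
proof -
  define S where "S = {x \<in> {a..b}. x \<in> {0<..<1} \<and> F differentiable (at x)}"
  have N: "negligible ({a..b} - S)" unfolding S_def by (rule neg_ab[OF ab])
  have SS: "S \<subseteq> {a..b}" unfolding S_def by auto
  have spike: "negligible {x \<in> {a..b} - S. \<phi> x \<noteq> 0}" "negligible {x \<in> S - {a..b}. \<phi> x \<noteq> 0}"
    for \<phi> :: "real \<Rightarrow> real"
  proof -
    show "negligible {x \<in> {a..b} - S. \<phi> x \<noteq> 0}" by (rule negligible_subset[OF N]) auto
    have "{x \<in> S - {a..b}. \<phi> x \<noteq> 0} = {}" using SS by auto
    then show "negligible {x \<in> S - {a..b}. \<phi> x \<noteq> 0}" by (metis negligible_empty)
  qed
  have fiS: "f k integrable_on S" for k by (rule integrable_spike_set[OF fi spike])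
  have hS: "(\<lambda>x. 1::real) integrable_on S"
    by (rule integrable_spike_set[OF integrable_continuous_interval[OF continuous_on_const] spike])
  have "g integrable_on S" "(\<lambda>k. integral S (f k)) \<longlonglongrightarrow> integral S g"
    by (rule dominated_convergence[OF fiS hS _ fl]; use fb S_def in auto)+
  moreover have eqi: "integral {a..b} \<phi> = integral S \<phi>" for \<phi> :: "real \<Rightarrow> real"
    by (rule integral_spike_set[OF spike])
  moreover have "g integrable_on {a..b}" if "g integrable_on S"
  proof (rule integrable_spike_set[OF that])
    have "{x \<in> S - {a..b}. g x \<noteq> 0} = {}" using SS by auto
    then show "negligible {x \<in> S - {a..b}. g x \<noteq> 0}" by (metis negligible_empty)
    show "negligible {x \<in> {a..b} - S. g x \<noteq> 0}" by (rule negligible_subset[OF N]) auto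
  qed
  ultimately show "g integrable_on {a..b}" "(\<lambda>k. integral {a..b} (f k)) \<longlonglongrightarrow> integral {a..b} g"
    by auto
qed

lemma ftc_lip:
  assumes ab: "0 \<le> a" "a \<le> b" "b \<le> 1"
  shows "(deriv F has_integral F b - F a) {a..b}"
proof -
  have fi: "dq F k integrable_on {a..b}" for k by (rule integrable_continuous_interval[OF dq_cont[OF lip mono]])
  have fb: "\<bar>dq F k x\<bar> \<le> 1" for k x using dq_bounds[OF lip mono, of k x] by auto
  note D = dc_ab[OF ab(1,3) fi fb dq_lim[OF lip mono]]
  have "integral {a..b} (deriv F) = F b - F a"
    using LIMSEQ_unique[OF D(2) dq_integral_lim[OF lip mono ab(2)]] .
  then show ?thesis using D(1) by (metis has_integral_integral)
qed

lemma sq_lim: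
  assumes ab: "0 \<le> a" "b \<le> 1"
  shows "(\<lambda>x. (deriv F x)^2) integrable_on {a..b}"
    "(\<lambda>n. integral {a..b} (\<lambda>x. (dq F n x)^2)) \<longlonglongrightarrow> integral {a..b} (\<lambda>x. (deriv F x)^2)"
proof -
  have fi: "(\<lambda>x. (dq F k x)^2) integrable_on {a..b}" for k
    by (intro integrable_continuous_interval continuous_intros dq_cont[OF lip mono])
  have fb: "\<bar>(dq F k x)^2\<bar> \<le> 1" for k x
    using dq_bounds[OF lip mono, of k x] by (auto simp: power_le_one)
  have fl: "(\<lambda>k. (dq F k x)^2) \<longlonglongrightarrow> (deriv F x)^2" if "F differentiable (at x)" for x
    by (intro tendsto_intros dq_lim[OF lip mono that])
  note D = dc_ab[OF ab fi fb fl]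
  show "(\<lambda>x. (deriv F x)^2) integrable_on {a..b}"
    "(\<lambda>n. integral {a..b} (\<lambda>x. (dq F n x)^2)) \<longlonglongrightarrow> integral {a..b} (\<lambda>x. (deriv F x)^2)"
    using D by auto
qed

end


lemma phi_diff:
  fixes \<mu> a b v :: real
  assumes "v \<noteq> 0" "1 - v \<noteq> 0"
  shows "(\<mu>*a + a^2/v + (v-a)^2/(1-v)) - (\<mu>*b + b^2/v + (v-b)^2/(1-v)) =
         (a-b)*(\<mu> + 2*b/v - 2*(v-b)/(1-v)) + (a-b)^2*(1/v + 1/(1-v))"
  using assms by (simp add: field_simps power2_eq_square)

lemma alg:
  fixes \<mu> v A :: real
  assumes \<mu>: "0 \<le> \<mu>" "\<mu> \<le> 2" and v: "0 < v" "v < 1" and A: "0 \<le> A" "A \<le> v" "v - A \<le> 1 - v"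
  shows "\<mu> * (v * h1_mu \<mu> v) + (v * (h1_mu \<mu> v)^2 + (1 - v) * (h2_mu \<mu> v)^2)
           \<le> \<mu> * A + (A^2/v + (v - A)^2/(1-v))"
proof -
  define b where "b = v * h1_mu \<mu> v"
  define K where "K = \<mu> + 2*b/v - 2*(v-b)/(1-v)"
  have v0: "v \<noteq> 0" "1 - v \<noteq> 0" using v by auto
  have hb: "v * (h1_mu \<mu> v)^2 = b^2 / v" unfolding b_def using v by (simp add: power2_eq_square)
  have key: "(v - b) = (1 - v) * h2_mu \<mu> v \<and> (A - b) * K \<ge> 0"
  proof (cases "v \<le> v0_mu \<mu>")
    case True
    have b0: "b = 0" unfolding b_def h1_mu_def using True by simp
    have h2: "h2_mu \<mu> v = v / (1 - v)" unfolding h2_mu_def using True by simp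
    have "v * (2 + \<mu>) \<le> \<mu>" using True \<mu> unfolding v0_mu_def by (simp add: field_simps)
    then have "2 * v \<le> \<mu> * (1 - v)" by (simp add: algebra_simps)
    then have "2 * v / (1 - v) \<le> \<mu>" using v by (simp add: field_simps)
    then have "K \<ge> 0" unfolding K_def b0 by simp
    then show ?thesis using b0 h2 A v by (simp add: field_simps)
  next
    case False
    note F1 = False
    show ?thesis
    proof (cases "v \<le> v1_mu \<mu>")
      case True
      have h1: "h1_mu \<mu> v = v - \<mu>/2 * (1 - v)" unfolding h1_mu_def using True F1 by simp
      have h2: "h2_mu \<mu> v = v + \<mu>/2 * v" unfolding h2_mu_def using True F1 by simp
      have vb: "v - b = (1 - v) * (v + \<mu>/2 * v)" unfolding b_def h1 by (simp add: algebra_simps)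
      have "K = \<mu> + 2 * (v - \<mu>/2 * (1 - v)) - 2 * (v + \<mu>/2 * v)"
        unfolding K_def vb using v0 by (simp add: b_def h1)
      then have "K = 0" by (simp add: field_simps)
      then show ?thesis using vb h2 by simp
    next
      case False
      have h1: "h1_mu \<mu> v = 2 - 1/v" unfolding h1_mu_def using False F1 by simp
      have h2: "h2_mu \<mu> v = 1" unfolding h2_mu_def using False F1 by simp
      have bb: "b = 2 * v - 1" unfolding b_def h1 using v by (simp add: field_simps)
      have "2 < v * (2 + \<mu>)" using False \<mu> unfolding v1_mu_def by (simp add: field_simps)
      then have "2 / v < 2 + \<mu>" using v by (simp add: field_simps)
      moreover have "K = \<mu> + 2 - 2 / v"
        unfolding K_def bb using v0 by (simp add: field_simps)
      ultimately have "K \<ge> 0" by simp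
      moreover have "A - b \<ge> 0" using A bb by simp
      ultimately show ?thesis using bb h2 by simp
    qed
  qed
  have "(\<mu>*A + A^2/v + (v-A)^2/(1-v)) - (\<mu>*b + b^2/v + (v-b)^2/(1-v)) \<ge> 0"
    unfolding phi_diff[OF v0] K_def[symmetric]
    using key v by (intro add_nonneg_nonneg) auto
  moreover have "(v-b)^2/(1-v) = (1 - v) * (h2_mu \<mu> v)^2"
    using key v0 by (simp add: power2_eq_square)
  ultimately show ?thesis unfolding b_def[symmetric] hb by simp
qed


definition clamp01 :: "real \<Rightarrow> real" where "clamp01 x = max 0 (min 1 x)"

lemma clamp01_props:
  "0 \<le> clamp01 x" "clamp01 x \<le> 1" "x \<in> {0..1} \<Longrightarrow> clamp01 x = x"
  "x \<le> y \<Longrightarrow> clamp01 x \<le> clamp01 y" "x \<le> y \<Longrightarrow> clamp01 y - clamp01 x \<le> y - x"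
  "\<bar>clamp01 x - clamp01 y\<bar> \<le> \<bar>x - y\<bar>"
  unfolding clamp01_def by (auto simp: max_def min_def)

lemma cop_u:
  assumes C: "is_copula C" and u: "0 \<le> u1" "u1 \<le> u2" "u2 \<le> 1" and v: "0 \<le> v" "v \<le> 1"
  shows "0 \<le> C u2 v - C u1 v" "C u2 v - C u1 v \<le> u2 - u1"
proof -
  have b: "\<And>u. u \<in> {0..1} \<Longrightarrow> C u 0 = 0 \<and> C 0 u = 0 \<and> C u 1 = u \<and> C 1 u = u"
    and inc: "\<And>u1 u2 v1 v2. 0 \<le> u1 \<Longrightarrow> u1 \<le> u2 \<Longrightarrow> u2 \<le> 1 \<Longrightarrow> 0 \<le> v1 \<Longrightarrow> v1 \<le> v2 \<Longrightarrow> v2 \<le> 1 \<Longrightarrow>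
        C u2 v2 - C u2 v1 - C u1 v2 + C u1 v1 \<ge> 0"
    using C unfolding is_copula_def by blast+
  have "C u2 v - C u2 0 - C u1 v + C u1 0 \<ge> 0" using inc[of u1 u2 0 v] u v by auto
  then show "0 \<le> C u2 v - C u1 v" using b[of u1] b[of u2] u by auto
  have "C u2 1 - C u2 v - C u1 1 + C u1 v \<ge> 0" using inc[of u1 u2 v 1] u v by auto
  then show "C u2 v - C u1 v \<le> u2 - u1" using b[of u1] b[of u2] u by auto
qed

lemma cop_v:
  assumes C: "is_copula C" and v: "0 \<le> v1" "v1 \<le> v2" "v2 \<le> 1" and u: "0 \<le> u" "u \<le> 1"
  shows "0 \<le> C u v2 - C u v1" "C u v2 - C u v1 \<le> v2 - v1"
proof -
  have b: "\<And>u. u \<in> {0..1} \<Longrightarrow> C u 0 = 0 \<and> C 0 u = 0 \<and> C u 1 = u \<and> C 1 u = u"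
    and inc: "\<And>u1 u2 v1 v2. 0 \<le> u1 \<Longrightarrow> u1 \<le> u2 \<Longrightarrow> u2 \<le> 1 \<Longrightarrow> 0 \<le> v1 \<Longrightarrow> v1 \<le> v2 \<Longrightarrow> v2 \<le> 1 \<Longrightarrow>
        C u2 v2 - C u2 v1 - C u1 v2 + C u1 v1 \<ge> 0"
    using C unfolding is_copula_def by blast+
  have "C u v2 - C u v1 - C 0 v2 + C 0 v1 \<ge> 0" using inc[of 0 u v1 v2] u v by auto
  then show "0 \<le> C u v2 - C u v1" using b[of v1] b[of v2] v by auto
  have "C 1 v2 - C 1 v1 - C u v2 + C u v1 \<ge> 0" using inc[of u 1 v1 v2] u v by auto
  then show "C u v2 - C u v1 \<le> v2 - v1" using b[of v1] b[of v2] v by auto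
qed

definition Ch :: "(real \<Rightarrow> real \<Rightarrow> real) \<Rightarrow> real \<Rightarrow> real \<Rightarrow> real" where
  "Ch C u v = C (clamp01 u) (clamp01 v)"

lemma Ch_lip:
  assumes C: "is_copula C" and xy: "x \<le> y"
  shows "Ch C y v - Ch C x v \<le> y - x" "Ch C x v \<le> Ch C y v"
proof -
  note cl = clamp01_props
  have "C (clamp01 y) (clamp01 v) - C (clamp01 x) (clamp01 v) \<le> clamp01 y - clamp01 x"
    "0 \<le> C (clamp01 y) (clamp01 v) - C (clamp01 x) (clamp01 v)"
    using cop_u[OF C, of "clamp01 x" "clamp01 y" "clamp01 v"] cl(1,2) cl(4)[OF xy] by auto
  then show "Ch C y v - Ch C x v \<le> y - x" "Ch C x v \<le> Ch C y v"
    unfolding Ch_def using cl(5)[OF xy] by auto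
qed

lemma Ch_lip_v:
  assumes C: "is_copula C"
  shows "\<bar>Ch C u v - Ch C u w\<bar> \<le> \<bar>v - w\<bar>"
proof -
  note cl = clamp01_props
  have *: "\<bar>C (clamp01 u) a - C (clamp01 u) b\<bar> \<le> \<bar>a - b\<bar>" if "0 \<le> a" "a \<le> 1" "0 \<le> b" "b \<le> 1" for a b
  proof (cases "a \<le> b")
    case True then show ?thesis using cop_v[OF C, of a b "clamp01 u"] that cl(1,2) by auto
  next
    case False then show ?thesis using cop_v[OF C, of b a "clamp01 u"] that cl(1,2) by auto
  qed
  have "\<bar>C (clamp01 u) (clamp01 v) - C (clamp01 u) (clamp01 w)\<bar> \<le> \<bar>clamp01 v - clamp01 w\<bar>"
    by (rule *) (simp_all add: cl(1,2))
  then show ?thesis unfolding Ch_def using cl(6)[of v w] by linarith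
qed

lemma Ch_eq: "u \<in> {0..1} \<Longrightarrow> v \<in> {0..1} \<Longrightarrow> Ch C u v = C u v"
  unfolding Ch_def by (simp add: clamp01_props)

lemma deriv_Ch:
  assumes u: "u \<in> {0<..<1}" and v: "v \<in> {0..1}"
  shows "deriv (\<lambda>t. C t v) u = deriv (\<lambda>t. Ch C t v) u"
proof (rule deriv_cong_ev)
  have "eventually (\<lambda>t. t \<in> {0<..<1}) (nhds u)" using u by (intro eventually_nhds_in_open) auto
  then show "eventually (\<lambda>t. C t v = Ch C t v) (nhds u)"
    by eventually_elim (use v in \<open>auto simp: Ch_eq\<close>)
qed simp

lemma cs_int:
  fixes f :: "real \<Rightarrow> real"
  assumes f: "(f has_integral m) {a..b}" and f2: "(\<lambda>x. (f x)^2) integrable_on {a..b}" and ab: "a < b"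
  shows "m^2 / (b - a) \<le> integral {a..b} (\<lambda>x. (f x)^2)"
proof -
  define c where "c = m / (b - a)"
  define I where "I = integral {a..b} (\<lambda>x. (f x)^2)"
  have hc: "((\<lambda>x. c^2) has_integral ((b - a) * c^2)) {a..b}"
    using has_integral_const_real[of "c^2" a b] ab by simp
  have H: "((\<lambda>x. (f x)^2 - 2 * c * f x + c^2) has_integral (I - 2 * c * m + (b - a) * c^2)) {a..b}"
    by (intro has_integral_add has_integral_diff has_integral_mult_right hc f
        integrable_integral[OF f2, unfolded I_def[symmetric]])
  have sq: "(f x)^2 - 2 * c * f x + c^2 = (f x - c)^2" for x by (simp add: power2_eq_square algebra_simps)
  have "0 \<le> I - 2 * c * m + (b - a) * c^2"
    by (rule has_integral_nonneg[OF H]) (simp only: sq zero_le_power2)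
  moreover have "2 * c * m - (b - a) * c^2 = m^2 / (b - a)"
  proof -
    have cb: "c * (b - a) = m" unfolding c_def using ab by simp
    have "2 * c * m - (b - a) * c^2 = c * (2 * m - c * (b - a))" by (simp add: power2_eq_square algebra_simps)
    also have "\<dots> = c * m" using cb by simp
    also have "\<dots> = m^2 / (b - a)" unfolding c_def by (simp add: power2_eq_square)
    finally show ?thesis .
  qed
  ultimately show ?thesis unfolding I_def[symmetric] by linarith
qed


lemma cop_bd:
  assumes "is_copula C" "0 \<le> u" "u \<le> 1"
  shows "C u 0 = 0" "C 0 u = 0" "C u 1 = u" "C 1 u = u"
  using assms unfolding is_copula_def by auto

lemma pointwise:
  assumes C: "is_copula C" and \<mu>: "0 \<le> \<mu>" "\<mu> \<le> 2" and v: "0 < v" "v < 1"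
  shows "\<mu> * (v * h1_mu \<mu> v) + (v * (h1_mu \<mu> v)^2 + (1 - v) * (h2_mu \<mu> v)^2)
    \<le> \<mu> * C v v + integral {0..1} (\<lambda>u. (deriv (\<lambda>t. C t v) u)^2)"
proof -
  define F where "F = (\<lambda>u. Ch C u v)"
  have lipF: "\<And>x y. x \<le> y \<Longrightarrow> F y - F x \<le> y - x" and monoF: "\<And>x y. x \<le> y \<Longrightarrow> F x \<le> F y"
    unfolding F_def using Ch_lip[OF C] by auto
  define D where "D = deriv F"
  have Ieq: "integral {0..1} (\<lambda>u. (deriv (\<lambda>t. C t v) u)^2) = integral {0..1} (\<lambda>u. (D u)^2)"
  proof (rule integral_spike[of "{0,1}"])
    fix u :: real assume "u \<in> {0..1} - {0, 1}"
    then have "u \<in> {0<..<1}" by (auto simp: less_le)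
    then show "(D u)^2 = (deriv (\<lambda>t. C t v) u)^2"
      unfolding D_def F_def using deriv_Ch[of u v C] v by simp
  qed simp
  have F0: "F 0 = 0" and Fv: "F v = C v v" and F1: "F 1 = v"
    unfolding F_def using v Ch_eq[of _ v C] cop_bd[OF C, of v] by auto
  have f1: "(D has_integral C v v) {0..v}"
    using ftc_lip[OF lipF monoF, of 0 v] v F0 Fv unfolding D_def by simp
  have f2: "(D has_integral v - C v v) {v..1}"
    using ftc_lip[OF lipF monoF, of v 1] v F1 Fv unfolding D_def by simp
  have s1: "(\<lambda>u. (D u)^2) integrable_on {0..v}" using sq_lim(1)[OF lipF monoF, of 0 v] v unfolding D_def by simp
  have s2: "(\<lambda>u. (D u)^2) integrable_on {v..1}" using sq_lim(1)[OF lipF monoF, of v 1] v unfolding D_def by simp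
  have s: "(\<lambda>u. (D u)^2) integrable_on {0..1}" using sq_lim(1)[OF lipF monoF, of 0 1] unfolding D_def by simp
  have cs1: "(C v v)^2 / (v - 0) \<le> integral {0..v} (\<lambda>u. (D u)^2)" by (rule cs_int[OF f1 s1]) (use v in simp)
  have cs2: "(v - C v v)^2 / (1 - v) \<le> integral {v..1} (\<lambda>u. (D u)^2)" by (rule cs_int[OF f2 s2]) (use v in simp)
  have comb: "integral {0..v} (\<lambda>u. (D u)^2) + integral {v..1} (\<lambda>u. (D u)^2) = integral {0..1} (\<lambda>u. (D u)^2)"
    by (rule Henstock_Kurzweil_Integration.integral_combine) (use v s in auto)
  have A1: "0 \<le> C v v" using cop_u[OF C, of 0 v v] v cop_bd[OF C, of v] by auto
  have A2: "C v v \<le> v" using cop_v[OF C, of v 1 v] v cop_bd[OF C, of v] by auto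
  have A3: "v - C v v \<le> 1 - v" using cop_u[OF C, of v 1 v] v cop_bd[OF C, of v] by auto
  have "\<mu> * (v * h1_mu \<mu> v) + (v * (h1_mu \<mu> v)^2 + (1 - v) * (h2_mu \<mu> v)^2)
      \<le> \<mu> * C v v + ((C v v)^2/v + (v - C v v)^2/(1-v))"
    by (rule alg[OF \<mu> v A1 A2 A3])
  also have "\<dots> \<le> \<mu> * C v v + integral {0..1} (\<lambda>u. (D u)^2)"
    using cs1 cs2 comb by simp
  finally show ?thesis unfolding Ieq .
qed


lemma int_piece:
  fixes f g :: "real \<Rightarrow> real"
  assumes "continuous_on {a..b} g" "\<And>x. x \<in> {a..b} - {a} \<Longrightarrow> f x = g x"
  shows "f integrable_on {a..b}"
  by (rule integrable_spike_finite[of "{a}", OF _ _ integrable_continuous_interval[OF assms(1)]])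
     (use assms(2) in auto)

lemma v01:
  assumes "0 \<le> \<mu>" "\<mu> \<le> 2"
  shows "0 \<le> v0_mu \<mu>" "v0_mu \<mu> \<le> v1_mu \<mu>" "v1_mu \<mu> \<le> 1" "v0_mu \<mu> < 1" "0 < v1_mu \<mu>"
  using assms mult_mono[of \<mu> 2 \<mu> 2] unfolding v0_mu_def v1_mu_def by (auto simp: field_simps)

lemma h_piece_int:
  fixes E :: "real \<Rightarrow> real \<Rightarrow> real \<Rightarrow> real"
  assumes \<mu>: "0 \<le> \<mu>" "\<mu> \<le> 2"
    and E: "\<And>S f g. continuous_on S f \<Longrightarrow> continuous_on S g \<Longrightarrow> continuous_on S (\<lambda>x. E (f x) (g x) x)"
  shows "(\<lambda>x. E (h1_mu \<mu> x) (h2_mu \<mu> x) x) integrable_on {0..1}"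
proof -
  note V = v01[OF \<mu>]
  let ?v0 = "v0_mu \<mu>" and ?v1 = "v1_mu \<mu>"
  have i1: "(\<lambda>x. E (h1_mu \<mu> x) (h2_mu \<mu> x) x) integrable_on {0..?v0}"
  proof (rule int_piece)
    show "continuous_on {0..?v0} (\<lambda>x. E 0 (x / (1 - x)) x)"
      by (intro E continuous_intros) (use V in auto)
    fix x assume "x \<in> {0..?v0} - {0}"
    then show "E (h1_mu \<mu> x) (h2_mu \<mu> x) x = E 0 (x / (1 - x)) x"
      unfolding h1_mu_def h2_mu_def by auto
  qed
  have i2: "(\<lambda>x. E (h1_mu \<mu> x) (h2_mu \<mu> x) x) integrable_on {?v0..?v1}"
  proof (rule int_piece)
    show "continuous_on {?v0..?v1} (\<lambda>x. E (x - \<mu>/2 * (1 - x)) (x + \<mu>/2 * x) x)"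
      by (intro E continuous_intros)
    fix x assume "x \<in> {?v0..?v1} - {?v0}"
    then show "E (h1_mu \<mu> x) (h2_mu \<mu> x) x = E (x - \<mu>/2 * (1 - x)) (x + \<mu>/2 * x) x"
      unfolding h1_mu_def h2_mu_def by auto
  qed
  have i3: "(\<lambda>x. E (h1_mu \<mu> x) (h2_mu \<mu> x) x) integrable_on {?v1..1}"
  proof (rule int_piece)
    show "continuous_on {?v1..1} (\<lambda>x. E (2 - 1 / x) 1 x)"
      by (intro E continuous_intros) (use V in auto)
    fix x assume "x \<in> {?v1..1} - {?v1}"
    then show "E (h1_mu \<mu> x) (h2_mu \<mu> x) x = E (2 - 1 / x) 1 x"
      unfolding h1_mu_def h2_mu_def using V by auto
  qed
  have i12: "(\<lambda>x. E (h1_mu \<mu> x) (h2_mu \<mu> x) x) integrable_on {0..?v1}"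
    by (rule Henstock_Kurzweil_Integration.integrable_combine[OF _ _ i1 i2]) (use V in auto)
  show ?thesis
    by (rule Henstock_Kurzweil_Integration.integrable_combine[OF _ _ i12 i3]) (use V in auto)
qed

lemma inner_xi:
  assumes v: "0 \<le> v" "v \<le> 1"
  shows "integral {0..1} (\<lambda>t. (h_mu \<mu> t v)^2) = v * (h1_mu \<mu> v)^2 + (1 - v) * (h2_mu \<mu> v)^2"
proof -
  have int: "(\<lambda>t. (h_mu \<mu> t v)^2) integrable_on {0..1}"
  proof (rule Henstock_Kurzweil_Integration.integrable_combine[of 0 v 1])
    show "(\<lambda>t. (h_mu \<mu> t v)^2) integrable_on {0..v}"
      by (rule integrable_eq[of "\<lambda>t. (h1_mu \<mu> v)^2"]) (auto simp: h_mu_def)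
    show "(\<lambda>t. (h_mu \<mu> t v)^2) integrable_on {v..1}"
      by (rule int_piece[of _ _ "\<lambda>t. (h2_mu \<mu> v)^2"]) (auto simp: h_mu_def)
  qed (use v in auto)
  have "integral {0..v} (\<lambda>t. (h_mu \<mu> t v)^2) = integral {0..v} (\<lambda>t. (h1_mu \<mu> v)^2)"
    by (rule Henstock_Kurzweil_Integration.integral_cong) (auto simp: h_mu_def)
  moreover have "integral {v..1} (\<lambda>t. (h_mu \<mu> t v)^2) = integral {v..1} (\<lambda>t. (h2_mu \<mu> v)^2)"
    by (rule integral_spike[of "{v}"]) (auto simp: h_mu_def)
  moreover have "integral {0..v} (\<lambda>t. (h_mu \<mu> t v)^2) + integral {v..1} (\<lambda>t. (h_mu \<mu> t v)^2)
      = integral {0..1} (\<lambda>t. (h_mu \<mu> t v)^2)"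
    by (rule Henstock_Kurzweil_Integration.integral_combine[OF _ _ int]) (use v in auto)
  ultimately show ?thesis using v by simp
qed

lemma inner_psi:
  assumes v: "0 \<le> v" "v \<le> 1"
  shows "integral {0..1} (\<lambda>t. (if t \<le> v then 1 else 0) * h_mu \<mu> t v) = v * h1_mu \<mu> v"
proof -
  let ?f = "\<lambda>t. (if t \<le> v then 1 else 0) * h_mu \<mu> t v"
  have int: "?f integrable_on {0..1}"
  proof (rule Henstock_Kurzweil_Integration.integrable_combine[of 0 v 1])
    show "?f integrable_on {0..v}"
      by (rule integrable_eq[of "\<lambda>t. h1_mu \<mu> v"]) (auto simp: h_mu_def)
    show "?f integrable_on {v..1}"
      by (rule int_piece[of _ _ "\<lambda>t. 0"]) (auto simp: h_mu_def)
  qed (use v in auto)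
  have "integral {0..v} ?f = integral {0..v} (\<lambda>t. h1_mu \<mu> v)"
    by (rule Henstock_Kurzweil_Integration.integral_cong) (auto simp: h_mu_def)
  moreover have "integral {v..1} ?f = integral {v..1} (\<lambda>t. 0)"
    by (rule integral_spike[of "{v}"]) (auto simp: h_mu_def)
  moreover have "integral {0..v} ?f + integral {v..1} ?f = integral {0..1} ?f"
    by (rule Henstock_Kurzweil_Integration.integral_combine[OF _ _ int]) (use v in auto)
  ultimately show ?thesis using v by simp
qed


lemma Iprime_int:
  assumes C: "is_copula C"
  shows "(\<lambda>v. integral {0..1} (\<lambda>u. (deriv (\<lambda>t. C t v) u)^2)) integrable_on {0..1}"
proof -
  define K where "K v = integral {0..1} (\<lambda>u. (deriv (\<lambda>t. Ch C t v) u)^2)" for v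
  define J where "J n v = integral {0..1} (\<lambda>u. (dq (\<lambda>t. Ch C t v) n u)^2)" for n v
  have lipF: "\<And>x y. x \<le> y \<Longrightarrow> Ch C y v - Ch C x v \<le> y - x"
    and monoF: "\<And>x y. x \<le> y \<Longrightarrow> Ch C x v \<le> Ch C y v" for v
    using Ch_lip[OF C] by auto
  have eqK: "integral {0..1} (\<lambda>u. (deriv (\<lambda>t. C t v) u)^2) = K v" if v: "v \<in> {0..1}" for v
    unfolding K_def
  proof (rule integral_spike[of "{0,1}"])
    fix u :: real assume "u \<in> {0..1} - {0, 1}"
    then have "u \<in> {0<..<1}" by (auto simp: less_le)
    then show "(deriv (\<lambda>t. Ch C t v) u)^2 = (deriv (\<lambda>t. C t v) u)^2"
      using deriv_Ch[of u v C] v by simp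
  qed simp
  have conv: "(\<lambda>n. J n v) \<longlonglongrightarrow> K v" if "v \<in> {0..1}" for v
    unfolding J_def K_def by (rule sq_lim(2)[OF lipF monoF]) auto
  have dqb: "0 \<le> dq (\<lambda>t. Ch C t v) n u" "dq (\<lambda>t. Ch C t v) n u \<le> 1" for n v u
    using dq_bounds[OF lipF monoF] by auto
  have sqint: "(\<lambda>u. (dq (\<lambda>t. Ch C t v) n u)^2) integrable_on {0..1}" for n v
    by (intro integrable_continuous_interval continuous_intros dq_cont[OF lipF monoF])
  have constI: "integral {0..1} (\<lambda>u::real. c) = c" for c :: real
    using integral_const_real[of c 0 1] by simp
  have cint: "(\<lambda>u::real. c) integrable_on {0..1}" for c :: real
    by (rule integrable_continuous_interval[OF continuous_on_const])
  have Jb: "\<bar>J n v\<bar> \<le> 1" for n v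
  proof -
    have "0 \<le> J n v" unfolding J_def by (rule integral_nonneg[OF sqint]) simp
    moreover have "J n v \<le> integral {0..1} (\<lambda>u::real. 1::real)" unfolding J_def
      by (rule Henstock_Kurzweil_Integration.integral_le[OF sqint cint]) (use dqb in \<open>auto simp: power_le_one\<close>)
    ultimately show ?thesis unfolding constI by simp
  qed
  have Jlip: "\<bar>J n v - J n w\<bar> \<le> 4 * real (Suc n) * \<bar>v - w\<bar>" for n v w
  proof -
    define B where "B = 4 * real (Suc n) * \<bar>v - w\<bar>"
    have pw: "\<bar>(dq (\<lambda>t. Ch C t v) n u)^2 - (dq (\<lambda>t. Ch C t w) n u)^2\<bar> \<le> B" for u
    proof -
      define k where "k = real (Suc n)"
      define d where "d = 1 / real (Suc n)"
      have k: "k > 0" by (simp add: k_def)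
      have "dq (\<lambda>t. Ch C t v) n u - dq (\<lambda>t. Ch C t w) n u =
          k * ((Ch C (u + d) v - Ch C (u + d) w) - (Ch C u v - Ch C u w))"
        unfolding dq_def k_def d_def by (simp add: algebra_simps)
      moreover have "\<bar>(Ch C (u + d) v - Ch C (u + d) w) - (Ch C u v - Ch C u w)\<bar> \<le> 2 * \<bar>v - w\<bar>"
        using Ch_lip_v[OF C, of "u + d" v w] Ch_lip_v[OF C, of u v w]
          abs_triangle_ineq4[of "Ch C (u + d) v - Ch C (u + d) w" "Ch C u v - Ch C u w"] by (smt (verit))
      ultimately have d1: "\<bar>dq (\<lambda>t. Ch C t v) n u - dq (\<lambda>t. Ch C t w) n u\<bar> \<le> k * (2 * \<bar>v - w\<bar>)"
        using k by (simp add: abs_mult mult_left_mono)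
      have d2: "\<bar>dq (\<lambda>t. Ch C t v) n u + dq (\<lambda>t. Ch C t w) n u\<bar> \<le> 2"
        using dqb[of v n u] dqb[of w n u] by linarith
      have "\<bar>(dq (\<lambda>t. Ch C t v) n u)^2 - (dq (\<lambda>t. Ch C t w) n u)^2\<bar> =
          \<bar>dq (\<lambda>t. Ch C t v) n u - dq (\<lambda>t. Ch C t w) n u\<bar> * \<bar>dq (\<lambda>t. Ch C t v) n u + dq (\<lambda>t. Ch C t w) n u\<bar>"
        by (simp add: power2_eq_square abs_mult[symmetric] algebra_simps)
      also have "\<dots> \<le> (k * (2 * \<bar>v - w\<bar>)) * 2"
        by (rule mult_mono[OF d1 d2]) (use k in auto)
      also have "\<dots> = B" unfolding B_def k_def by simp
      finally show ?thesis .
    qed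
    have pw1: "(dq (\<lambda>t. Ch C t v) n u)^2 - (dq (\<lambda>t. Ch C t w) n u)^2 \<le> B"
      "- B \<le> (dq (\<lambda>t. Ch C t v) n u)^2 - (dq (\<lambda>t. Ch C t w) n u)^2" for u
      using pw[of u] unfolding abs_le_iff by linarith+
    have "J n v - J n w = integral {0..1} (\<lambda>u. (dq (\<lambda>t. Ch C t v) n u)^2 - (dq (\<lambda>t. Ch C t w) n u)^2)"
      unfolding J_def by (rule Henstock_Kurzweil_Integration.integral_diff[symmetric, OF sqint sqint])
    moreover have "integral {0..1} (\<lambda>u. (dq (\<lambda>t. Ch C t v) n u)^2 - (dq (\<lambda>t. Ch C t w) n u)^2) \<le> integral {0..1} (\<lambda>u::real. B)"
      by (rule Henstock_Kurzweil_Integration.integral_le[OF integrable_diff[OF sqint sqint] cint])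
         (use pw1 in auto)
    moreover have "integral {0..1} (\<lambda>u::real. - B) \<le> integral {0..1} (\<lambda>u. (dq (\<lambda>t. Ch C t v) n u)^2 - (dq (\<lambda>t. Ch C t w) n u)^2)"
      by (rule Henstock_Kurzweil_Integration.integral_le[OF cint integrable_diff[OF sqint sqint]])
         (use pw1 in auto)
    ultimately show ?thesis unfolding constI B_def[symmetric] by (simp add: abs_le_iff)
  qed
  have Jcont: "continuous_on {0..1} (J n)" for n
  proof (rule lipschitz_on_continuous_on[where L="4 * real (Suc n)"], rule lipschitz_onI)
    fix v w :: real
    show "dist (J n v) (J n w) \<le> 4 * real (Suc n) * dist v w"
      using Jlip[of n v w] by (simp add: dist_real_def)
  qed simp
  have "K integrable_on {0..1}"
    by (rule dominated_convergence(1)[where f=J and h="\<lambda>_. 1"])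
       (use Jcont Jb conv in \<open>auto intro: integrable_continuous_interval\<close>)
  then show ?thesis using eqK by (rule integrable_eq[OF _ sym])
qed

lemma diag_int:
  assumes C: "is_copula C"
  shows "(\<lambda>v. C v v) integrable_on {0..1}"
proof -
  have l: "\<bar>Ch C x v - Ch C y v\<bar> \<le> \<bar>x - y\<bar>" for x y v
  proof (cases "x \<le> y")
    case True then show ?thesis using Ch_lip[OF C True, of v] by auto
  next
    case False then have "y \<le> x" by simp
    then show ?thesis using Ch_lip[OF C, of y x v] by auto
  qed
  have "2-lipschitz_on UNIV (\<lambda>x. Ch C x x)"
  proof (rule lipschitz_onI)
    fix x y :: real
    show "dist (Ch C x x) (Ch C y y) \<le> 2 * dist x y"
      using l[where x=x and y=y and v=x] Ch_lip_v[OF C, of y x y] unfolding dist_real_def by (smt (verit))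
  qed simp
  then have "continuous_on {0..1} (\<lambda>x. Ch C x x)"
    by (rule continuous_on_subset[OF lipschitz_on_continuous_on]) simp
  then have "(\<lambda>x. Ch C x x) integrable_on {0..1}" by (rule integrable_continuous_interval)
  then show ?thesis by (rule integrable_eq) (simp add: Ch_eq)
qed

theorem mainTheorem6:
  fixes \<mu> :: real and C :: "real \<Rightarrow> real \<Rightarrow> real"
  assumes "0 \<le> \<mu>" and "\<mu> \<le> 2" and "is_copula C"
  shows "\<mu> * psi_cop C + xi_cop C \<ge> \<mu> * psi_searrow \<mu> + xi_searrow \<mu>"
proof -
  note \<mu> = assms(1,2) and C = assms(3)
  define I where "I v = integral {0..1} (\<lambda>u. (deriv (\<lambda>t. C t v) u)^2)" for v
  define Ps where "Ps v = integral {0..1} (\<lambda>t. (if t \<le> v then 1 else 0) * h_mu \<mu> t v)" for v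
  define Xi where "Xi v = integral {0..1} (\<lambda>t. (h_mu \<mu> t v)^2)" for v
  define Lam where "Lam v = \<mu> * C v v + I v" for v
  define Phi where "Phi v = \<mu> * Ps v + Xi v" for v
  have Iint: "I integrable_on {0..1}" unfolding I_def by (rule Iprime_int[OF C])
  have Dint: "(\<lambda>v. C v v) integrable_on {0..1}" by (rule diag_int[OF C])
  have E1: "continuous_on S (\<lambda>x. x * f x)" if "continuous_on S f" "continuous_on S g" for S :: "real set" and f g :: "real \<Rightarrow> real"
    using that by (auto intro!: continuous_intros)
  have E2: "continuous_on S (\<lambda>x. x * (f x)^2 + (1 - x) * (g x)^2)" if "continuous_on S f" "continuous_on S g" for S :: "real set" and f g :: "real \<Rightarrow> real"
    using that by (auto intro!: continuous_intros)
  have Psint: "Ps integrable_on {0..1}"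
  proof (rule integrable_eq[OF h_piece_int[where E="\<lambda>a b x. x * a", OF \<mu> E1]])
    fix x :: real assume "x \<in> {0..1}"
    then show "x * h1_mu \<mu> x = Ps x" unfolding Ps_def using inner_psi[of x \<mu>] by simp
  qed
  have Xiint: "Xi integrable_on {0..1}"
  proof (rule integrable_eq[OF h_piece_int[where E="\<lambda>a b x. x * a^2 + (1 - x) * b^2", OF \<mu> E2]])
    fix x :: real assume "x \<in> {0..1}"
    then show "x * (h1_mu \<mu> x)^2 + (1 - x) * (h2_mu \<mu> x)^2 = Xi x" unfolding Xi_def using inner_xi[of x \<mu>] by simp
  qed
  have Lint: "Lam integrable_on {0..1}" unfolding Lam_def
    by (intro Henstock_Kurzweil_Integration.integrable_add integrable_on_mult_right Dint Iint)
  have Pint: "Phi integrable_on {0..1}" unfolding Phi_def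
    by (intro Henstock_Kurzweil_Integration.integrable_add integrable_on_mult_right Psint Xiint)
  have pw: "Phi v \<le> Lam v" if "v \<in> {0<..<1}" for v
  proof -
    have v: "0 < v" "v < 1" using that by auto
    show ?thesis unfolding Phi_def Lam_def Ps_def Xi_def I_def
      using pointwise[OF C \<mu> v] inner_psi[of v \<mu>] inner_xi[of v \<mu>] v by simp
  qed
  have negd: "negligible {x \<in> {0..1} - {0<..<1}. f x \<noteq> 0}" "negligible {x \<in> {0<..<1} - {0..1}. f x \<noteq> 0}"
    for f :: "real \<Rightarrow> real"
  proof -
    show "negligible {x \<in> {0..1} - {0<..<1}. f x \<noteq> 0}"
      by (rule negligible_subset[of "{0,1}"]) auto
    show "negligible {x \<in> {0<..<1} - {0..1}. f x \<noteq> 0}"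
      by (rule negligible_subset[of "{}"]) auto
  qed
  have "integral {0..1} Phi = integral {0<..<1} Phi" by (rule integral_spike_set[OF negd])
  also have "\<dots> \<le> integral {0<..<1} Lam"
    by (rule Henstock_Kurzweil_Integration.integral_le[OF integrable_spike_set[OF Pint negd] integrable_spike_set[OF Lint negd] pw])
  also have "\<dots> = integral {0..1} Lam" by (rule integral_spike_set[symmetric, OF negd])
  finally have main: "integral {0..1} Phi \<le> integral {0..1} Lam" .
  have eL: "integral {0..1} Lam = \<mu> * integral {0..1} (\<lambda>v. C v v) + integral {0..1} I"
    unfolding Lam_def
    by (subst Henstock_Kurzweil_Integration.integral_add) (auto intro: integrable_on_mult_right Dint Iint)
  have eP: "integral {0..1} Phi = \<mu> * integral {0..1} Ps + integral {0..1} Xi"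
    unfolding Phi_def
    by (subst Henstock_Kurzweil_Integration.integral_add) (auto intro: integrable_on_mult_right Psint Xiint)
  have "\<mu> * psi_cop C + xi_cop C = 6 * integral {0..1} Lam - 2 * \<mu> - 2"
    unfolding psi_cop_def xi_cop_def eL I_def by (simp add: algebra_simps)
  moreover have "\<mu> * psi_searrow \<mu> + xi_searrow \<mu> = 6 * integral {0..1} Phi - 2 * \<mu> - 2"
    unfolding psi_searrow_def xi_searrow_def eP Ps_def Xi_def by (simp add: algebra_simps)
  ultimately show ?thesis using main by simp
qed


end
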